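(* Let $p$ be a prime and $A_*$ a graded commutative algebra over $\mathbb F_p$. Then $D_1(G_p(A_* ))=\Gamma_1(G_p(A_* ))\subset G_p^{(0.5)}(A_* )$, and for every positive integer $k$, $$D_{k+1}(G_p(A_* ))\subset G_p^{(2k)}(A_* ),\qquad \Gamma_{k+1}(G_p(A_* ))\subset G_p^{(k+0.5)}(A_* ).$$
   Context: Graded commutative means $ab=(-1)^{\deg a\deg b}ba$. If $p=2$, $G_2(A_* )$ is the set of power series $\alpha(X)=\sum_{i\ge0}\alpha_iX^{2^i}\in A_*[[X]]$ ($X$ of degree $-1$) with $\alpha_i\in A_{2^i-1}$ and $\alpha_0=1$; in this case put $\epsilon=0$. If $p$ is odd, let $\epsilon$ have degree $-1$ with $\epsilon^2=0$, $X$ degree $-2$, and $G_p(A_* )$ is the set of $\alpha(X)=\sum_{i\ge0}\alpha_iX^{p^i}\in (A_*\otimes_{\mathbb F_p}\mathbb F_p[\epsilon]/(\epsilon^2))[[X]]$ with $\alpha_i$ homogeneous of degree $2(p^i-1)$ and $\alpha_0-1\in(\epsilon)$. The group law is $\alpha(X)\cdot\beta(X)=\beta(\alpha(X))$, i.e. the coefficient of $X^{p^i}$ in $\alpha\cdot\beta$ is $\sum_{j=0}^i\alpha_{i-j}^{p^j}\beta_j$; the identity is $X$. For an integer $k\ge0$, $G_p^{(k)}(A_* )$ is the subgroup of elements of the form $X+\sum_{i\ge k+1}\alpha_iX^{p^i}$, and $G_p^{(k+0.5)}(A_* )$ is the subgroup of elements of the form $X+\sum_{i\ge k+1}\alpha_iX^{p^i}$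 with $\alpha_{k+1}\in(\epsilon)$. For a group $G$, $D_0(G)=\Gamma_0(G)=G$, $D_{k+1}(G)=[D_k(G),D_k(G)]$ and $\Gamma_{k+1}(G)=[\Gamma_k(G),G]$, where $[H,K]$ is the subgroup generated by commutators. *)

theory Defs
  imports "HOL-Algebra.Algebra"
begin

text \<open>A (Z-)graded commutative algebra over F_p: a ring R (HOL-Algebra) with a grading
  A :: int => 'a set such that R is the internal direct sum of the additive subgroups A n,
  A m * A n is contained in A (m+n), the unit lies in A 0, multiplication is graded
  commutative (ab = (-1)^(deg a deg b) ba), and p * 1 = 0 (so R is an F_p-algebra,
  p prime; such an algebra structure is unique).\<close>

definition graded_comm_algebra ::
  "nat \<Rightarrow> ('a, 'b) ring_scheme \<Rightarrow> (int \<Rightarrow> 'a set) \<Rightarrow> bool" where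
  "graded_comm_algebra p R A \<longleftrightarrow>
     ring R
   \<and> (\<forall>n. additive_subgroup (A n) R)
   \<and> (\<forall>x \<in> carrier R. \<exists>I f. finite I \<and> (\<forall>n\<in>I. f n \<in> A n) \<and> x = (\<Oplus>\<^bsub>R\<^esub> n\<in>I. f n))
   \<and> (\<forall>I f. finite I \<and> (\<forall>n\<in>I. f n \<in> A n) \<and> (\<Oplus>\<^bsub>R\<^esub> n\<in>I. f n) = \<zero>\<^bsub>R\<^esub>
          \<longrightarrow> (\<forall>n\<in>I. f n = \<zero>\<^bsub>R\<^esub>))
   \<and> \<one>\<^bsub>R\<^esub> \<in> A 0
   \<and> (\<forall>m n a b. a \<in> A m \<and> b \<in> A n \<longrightarrow> a \<otimes>\<^bsub>R\<^esub> b \<in> A (m + n))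
   \<and> (\<forall>m n a b. a \<in> A m \<and> b \<in> A n \<longrightarrow>
        a \<otimes>\<^bsub>R\<^esub> b = (if even (m * n) then b \<otimes>\<^bsub>R\<^esub> a else \<ominus>\<^bsub>R\<^esub> (b \<otimes>\<^bsub>R\<^esub> a)))
   \<and> add_pow R p \<one>\<^bsub>R\<^esub> = \<zero>\<^bsub>R\<^esub>"

text \<open>An element a + eps b of A_* (x) F_p[eps]/(eps^2) is represented by the pair (a, b).
  For p = 2 we have eps = 0, so only pairs (a, 0) occur.  All coefficients alpha_i have
  even degree (for p odd), so the product in A_* (x) F_p[eps]/(eps^2) of two such elements is
  (a + eps b)(c + eps d) = ac + eps (ad + bc) (no Koszul signs occur).\<close>

definition eps_mult :: "('a, 'b) ring_scheme \<Rightarrow> 'a \<times> 'a \<Rightarrow> 'a \<times> 'a \<Rightarrow> 'a \<times> 'a" where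
  "eps_mult R x y = (fst x \<otimes>\<^bsub>R\<^esub> fst y, fst x \<otimes>\<^bsub>R\<^esub> snd y \<oplus>\<^bsub>R\<^esub> snd x \<otimes>\<^bsub>R\<^esub> fst y)"

definition eps_pow :: "('a, 'b) ring_scheme \<Rightarrow> 'a \<times> 'a \<Rightarrow> nat \<Rightarrow> 'a \<times> 'a" where
  "eps_pow R x n = (eps_mult R x ^^ n) (\<one>\<^bsub>R\<^esub>, \<zero>\<^bsub>R\<^esub>)"

text \<open>Degree of the coefficient alpha_i (the coefficient of X^(p^i)).\<close>
definition coeff_deg :: "nat \<Rightarrow> nat \<Rightarrow> int" where
  "coeff_deg p i = (if p = 2 then int (2 ^ i) - 1 else 2 * (int (p ^ i) - 1))"

text \<open>alpha = (alpha_i)_i, alpha_i = a_i + eps b_i with a_i homogeneous of degree coeff_deg p i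
  and eps b_i of the same degree (eps has degree -1, so b_i has degree coeff_deg p i + 1);
  alpha_0 - 1 in (eps), i.e. a_0 = 1.  For p = 2, eps = 0, i.e. b_i = 0.\<close>
definition Gp_carrier :: "nat \<Rightarrow> ('a, 'b) ring_scheme \<Rightarrow> (int \<Rightarrow> 'a set) \<Rightarrow> (nat \<Rightarrow> 'a \<times> 'a) set" where
  "Gp_carrier p R A = {\<alpha>.
      (\<forall>i. fst (\<alpha> i) \<in> A (coeff_deg p i))
    \<and> (\<forall>i. snd (\<alpha> i) \<in> (if p = 2 then {\<zero>\<^bsub>R\<^esub>} else A (coeff_deg p i + 1)))
    \<and> fst (\<alpha> 0) = \<one>\<^bsub>R\<^esub>}"

text \<open>Group law: coefficient i of alpha * beta = beta(alpha(X)) is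
  sum_{j=0..i} alpha_{i-j}^(p^j) beta_j.\<close>
definition Gp_mult :: "nat \<Rightarrow> ('a, 'b) ring_scheme \<Rightarrow> (nat \<Rightarrow> 'a \<times> 'a) \<Rightarrow> (nat \<Rightarrow> 'a \<times> 'a) \<Rightarrow> (nat \<Rightarrow> 'a \<times> 'a)" where
  "Gp_mult p R \<alpha> \<beta> = (\<lambda>i.
     ((\<Oplus>\<^bsub>R\<^esub> j\<in>{..i}. fst (eps_mult R (eps_pow R (\<alpha> (i - j)) (p ^ j)) (\<beta> j))),
      (\<Oplus>\<^bsub>R\<^esub> j\<in>{..i}. snd (eps_mult R (eps_pow R (\<alpha> (i - j)) (p ^ j)) (\<beta> j)))))"

definition Gp :: "nat \<Rightarrow> ('a, 'b) ring_scheme \<Rightarrow> (int \<Rightarrow> 'a set) \<Rightarrow> (nat \<Rightarrow> 'a \<times> 'a) monoid" where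
  "Gp p R A = \<lparr> carrier = Gp_carrier p R A,
                monoid.mult = Gp_mult p R,
                monoid.one = (\<lambda>i. if i = 0 then (\<one>\<^bsub>R\<^esub>, \<zero>\<^bsub>R\<^esub>) else (\<zero>\<^bsub>R\<^esub>, \<zero>\<^bsub>R\<^esub>)) \<rparr>"

text \<open>G_p^(k): elements X + sum_{i >= k+1} alpha_i X^(p^i).\<close>
definition Gp_filt :: "nat \<Rightarrow> ('a, 'b) ring_scheme \<Rightarrow> (int \<Rightarrow> 'a set) \<Rightarrow> nat \<Rightarrow> (nat \<Rightarrow> 'a \<times> 'a) set" where
  "Gp_filt p R A k = {\<alpha> \<in> Gp_carrier p R A.
      \<alpha> 0 = (\<one>\<^bsub>R\<^esub>, \<zero>\<^bsub>R\<^esub>) \<and> (\<forall>i. 1 \<le> i \<and> i \<le> k \<longrightarrow> \<alpha> i = (\<zero>\<^bsub>R\<^esub>, \<zero>\<^bsub>R\<^esub>))}"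

text \<open>G_p^(k+0.5): elements of G_p^(k) with alpha_(k+1) in (eps).\<close>
definition Gp_filt_half :: "nat \<Rightarrow> ('a, 'b) ring_scheme \<Rightarrow> (int \<Rightarrow> 'a set) \<Rightarrow> nat \<Rightarrow> (nat \<Rightarrow> 'a \<times> 'a) set" where
  "Gp_filt_half p R A k = {\<alpha> \<in> Gp_filt p R A k. fst (\<alpha> (Suc k)) = \<zero>\<^bsub>R\<^esub>}"

definition derived_series :: "('a, 'b) monoid_scheme \<Rightarrow> nat \<Rightarrow> 'a set" where
  "derived_series G k = (derived G ^^ k) (carrier G)"

text \<open>Gamma_0(G) = G, Gamma_(k+1)(G) = [Gamma_k(G), G].\<close>
definition comm_subgroup :: "('a, 'b) monoid_scheme \<Rightarrow> 'a set \<Rightarrow> 'a set \<Rightarrow> 'a set" where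
  "comm_subgroup G H K = generate G
     (\<Union>h \<in> H. \<Union>k \<in> K. {h \<otimes>\<^bsub>G\<^esub> k \<otimes>\<^bsub>G\<^esub> inv\<^bsub>G\<^esub> h \<otimes>\<^bsub>G\<^esub> inv\<^bsub>G\<^esub> k})"

definition lower_central :: "('a, 'b) monoid_scheme \<Rightarrow> nat \<Rightarrow> 'a set" where
  "lower_central G k = ((\<lambda>H. comm_subgroup G H (carrier G)) ^^ k) (carrier G)"

end

theory Submission
  imports Defs "HOL-Computational_Algebra.Primes"
begin



context abelian_monoid begin

lemma finsum_sub_nz:
  assumes "finite I" "S \<subseteq> I" "f \<in> I \<rightarrow> carrier G" "\<And>j. j \<in> I - S \<Longrightarrow> f j = \<zero>"
  shows "finsum G f I = finsum G f S"
  using assms by (intro add.finprod_mono_neutral_cong_right) auto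

lemma finsum_single: "f a \<in> carrier G \<Longrightarrow> finsum G f {a} = f a"
  using finsum_insert[of "{}" a f] by simp

lemma finsum_nz1:
  assumes "finite I" "a \<in> I" "f \<in> I \<rightarrow> carrier G" "\<And>j. j \<in> I \<Longrightarrow> j \<noteq> a \<Longrightarrow> f j = \<zero>"
  shows "finsum G f I = f a"
proof -
  have "finsum G f {a} = f a" using assms by (intro finsum_single) blast
  then show ?thesis using assms by (subst finsum_sub_nz[of I "{a}"]) auto
qed

lemma finsum_nz2:
  assumes "finite I" "a \<in> I" "b \<in> I" "a \<noteq> b" "f \<in> I \<rightarrow> carrier G"
    "\<And>j. j \<in> I \<Longrightarrow> j \<noteq> a \<Longrightarrow> j \<noteq> b \<Longrightarrow> f j = \<zero>"
  shows "finsum G f I = f a \<oplus> f b"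
proof -
  have "finsum G f {a,b} = f a \<oplus> finsum G f {b}" by (rule finsum_insert) (use assms in auto)
  moreover have "finsum G f {b} = f b" using assms by (intro finsum_single) blast
  ultimately show ?thesis using assms by (subst finsum_sub_nz[of I "{a,b}"]) auto
qed

lemma finsum_nz3:
  assumes "finite I" "a \<in> I" "b \<in> I" "c \<in> I" "a \<noteq> b" "a \<noteq> c" "b \<noteq> c" "f \<in> I \<rightarrow> carrier G"
    "\<And>j. j \<in> I \<Longrightarrow> j \<noteq> a \<Longrightarrow> j \<noteq> b \<Longrightarrow> j \<noteq> c \<Longrightarrow> f j = \<zero>"
  shows "finsum G f I = f a \<oplus> (f b \<oplus> f c)"
proof -
  have "finsum G f {a,b,c} = f a \<oplus> finsum G f {b,c}" by (rule finsum_insert) (use assms in auto)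
  moreover have "finsum G f {b,c} = f b \<oplus> finsum G f {c}" by (rule finsum_insert) (use assms in auto)
  moreover have "finsum G f {c} = f c" using assms by (intro finsum_single) blast
  ultimately show ?thesis using assms by (subst finsum_sub_nz[of I "{a,b,c}"]) auto
qed

end

context cring begin

lemma binomial_ring_alg:
  assumes x: "x \<in> carrier R" and y: "y \<in> carrier R"
  shows "(x \<oplus> y) [^] n = (\<Oplus>k\<in>{..n}. add_pow R (n choose k) (x [^] k \<otimes> y [^] (n - k)))"
proof (induction n)
  case 0
  then show ?case using x y by simp
next
  case (Suc n)
  define S where "S = (\<Oplus>k\<in>{..n}. add_pow R (n choose k) (x [^] k \<otimes> y [^] (n - k)))"
  have S: "S \<in> carrier R" unfolding S_def using x y by (intro finsum_closed) auto
  have "(x \<oplus> y) [^] Suc n = S \<otimes> (x \<oplus> y)" using Suc S_def by simp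
  also have "\<dots> = S \<otimes> x \<oplus> S \<otimes> y" using S x y r_distr by simp
  finally have e1: "(x \<oplus> y) [^] Suc n = S \<otimes> x \<oplus> S \<otimes> y" .
  have Sx: "S \<otimes> x = (\<Oplus>k\<in>{..n}. add_pow R (n choose k) (x [^] Suc k \<otimes> y [^] (n - k)))"
    unfolding S_def using x y
    by (subst finsum_ldistr) (auto intro!: finsum_cong simp: add_pow_ldistr add_pow_rdistr m_ac nat_pow_Suc2)
  have Sy0: "S \<otimes> y = (\<Oplus>k\<in>{..n}. add_pow R (n choose k) (x [^] k \<otimes> y [^] (Suc n - k)))"
    unfolding S_def using x y
    by (subst finsum_ldistr) (auto intro!: finsum_cong simp: add_pow_ldistr add_pow_rdistr m_ac nat_pow_Suc2 Suc_diff_le)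
  also have "\<dots> = (\<Oplus>k\<in>{..Suc n}. add_pow R (n choose k) (x [^] k \<otimes> y [^] (Suc n - k)))"
    using x y by (subst finsum_Suc) (auto simp: binomial_eq_0)
  also have "\<dots> = (\<Oplus>k\<in>{..n}. add_pow R (n choose Suc k) (x [^] Suc k \<otimes> y [^] (n - k))) \<oplus> y [^] Suc n"
    using x y by (subst finsum_Suc2) auto
  finally have Sy: "S \<otimes> y = (\<Oplus>k\<in>{..n}. add_pow R (n choose Suc k) (x [^] Suc k \<otimes> y [^] (n - k))) \<oplus> y [^] Suc n" .
  have "(\<Oplus>k\<in>{..Suc n}. add_pow R (Suc n choose k) (x [^] k \<otimes> y [^] (Suc n - k)))
      = (\<Oplus>k\<in>{..n}. add_pow R (Suc n choose Suc k) (x [^] Suc k \<otimes> y [^] (n - k))) \<oplus> y [^] Suc n"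
    using x y by (subst finsum_Suc2) auto
  also have "(\<Oplus>k\<in>{..n}. add_pow R (Suc n choose Suc k) (x [^] Suc k \<otimes> y [^] (n - k)))
     = (\<Oplus>k\<in>{..n}. add_pow R (n choose k) (x [^] Suc k \<otimes> y [^] (n - k)) \<oplus> add_pow R (n choose Suc k) (x [^] Suc k \<otimes> y [^] (n - k)))"
    using x y by (intro finsum_cong) (auto simp: add.nat_pow_mult)
  also have "\<dots> = S \<otimes> x \<oplus> (\<Oplus>k\<in>{..n}. add_pow R (n choose Suc k) (x [^] Suc k \<otimes> y [^] (n - k)))"
    unfolding Sx using x y by (subst finsum_addf) auto
  finally show ?case unfolding e1 Sy using x y S
    by (simp add: a_assoc)
qed

lemma frobenius_alg:
  assumes x: "x \<in> carrier R" and y: "y \<in> carrier R" and p: "Factorial_Ring.prime (p::nat)"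
    and char: "add_pow R (p) \<one> = \<zero>"
  shows "(x \<oplus> y) [^] p = x [^] p \<oplus> y [^] p"
proof -
  have p0: "p > 0" using p prime_gt_0_nat by blast
  have z: "add_pow R (p choose k) z = \<zero>" if "0 < k" "k < p" "z \<in> carrier R" for k z
  proof -
    have "p dvd (p choose k)" using dvd_choose_prime[of k p] that p p0 by auto
    then obtain q where q: "p choose k = p * q" by (metis dvdE)
    have "add_pow R (p) z = \<zero>" using add_pow_ldistr[of \<one> z p] char that by simp
    then show ?thesis using q that add.nat_pow_pow[of z q p] by (simp add: mult.commute)
  qed
  obtain m where m: "p = Suc m" using p0 gr0_conv_Suc by blast
  have "(x \<oplus> y) [^] p = (\<Oplus>k\<in>{..Suc m}. add_pow R (p choose k) (x [^] k \<otimes> y [^] (p - k)))"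
    using binomial_ring_alg[OF x y, of p] by (simp only: m)
  also have "\<dots> = add_pow R (p choose p) (x [^] p \<otimes> y [^] (p - p)) \<oplus> (\<Oplus>k\<in>{..m}. add_pow R (p choose k) (x [^] k \<otimes> y [^] (p - k)))"
    using x y m by (subst finsum_Suc) auto
  also have "(\<Oplus>k\<in>{..m}. add_pow R (p choose k) (x [^] k \<otimes> y [^] (p - k))) = 
      (\<Oplus>k\<in>{..m}. (if k = 0 then y [^] p else \<zero>))"
  proof -
    have eqs: "add_pow R (p choose i) (x [^] i \<otimes> y [^] (p - i)) = (if i = 0 then y [^] p else \<zero>)"
      if i: "i \<in> {..m}" for i
    proof (cases "i = 0")
      case True then show ?thesis using y by simp
    next
      case False then show ?thesis using i m x y z[of i "x [^] i \<otimes> y [^] (p - i)"] by auto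
    qed
    show ?thesis using x y by (intro finsum_cong) (auto simp: eqs)
  qed
  also have "\<dots> = y [^] p"
    using y by (subst finsum_nz1[of _ 0]) auto
  finally show ?thesis using x y by simp
qed

end



locale gca = ring R for R :: "('a, 'b) ring_scheme" (structure) +
  fixes p :: nat and A :: "int \<Rightarrow> 'a set"
  assumes prime_p: "Factorial_Ring.prime p"
    and gca: "graded_comm_algebra p R A"
begin


lemmas g_unf = gca[unfolded graded_comm_algebra_def]

lemma g_sub: "\<forall>n. additive_subgroup (A n) R" using g_unf by (elim conjE) assumption
lemma g_dec: "\<forall>x \<in> carrier R. \<exists>I f. finite I \<and> (\<forall>n\<in>I. f n \<in> A n) \<and> x = (\<Oplus>n\<in>I. f n)"
  using g_unf by (elim conjE) assumption
lemma g_one: "\<one> \<in> A 0" using g_unf by (elim conjE) assumption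
lemma g_mult: "\<forall>m n a b. a \<in> A m \<and> b \<in> A n \<longrightarrow> a \<otimes> b \<in> A (m + n)"
  using g_unf by (elim conjE) assumption

lemma subA: "additive_subgroup (A n) R" using g_sub by blast

lemma A_carrier: "x \<in> A n \<Longrightarrow> x \<in> carrier R"
  using additive_subgroup.a_subset[OF subA] by blast

lemma A_zero[simp]: "\<zero> \<in> A n" using additive_subgroup.zero_closed[OF subA] .
lemma A_add: "x \<in> A n \<Longrightarrow> y \<in> A n \<Longrightarrow> x \<oplus> y \<in> A n"
  using additive_subgroup.a_closed[OF subA] by blast
lemma A_neg: "x \<in> A n \<Longrightarrow> \<ominus> x \<in> A n"
  using additive_subgroup.a_inv_closed[OF subA] by blast

lemma A_decomp: "x \<in> carrier R \<Longrightarrow> \<exists>I f. finite I \<and> (\<forall>n\<in>I. f n \<in> A n) \<and> x = (\<Oplus>n\<in>I. f n)"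
  using g_dec by blast

lemma A_one: "\<one> \<in> A 0" using g_one .

lemma A_mult: "a \<in> A m \<Longrightarrow> b \<in> A n \<Longrightarrow> a \<otimes> b \<in> A (m + n)"
  using g_mult by blast

lemma A_comm: "a \<in> A m \<Longrightarrow> b \<in> A n \<Longrightarrow>
   a \<otimes> b = (if even (m * n) then b \<otimes> a else \<ominus> (b \<otimes> a))"
proof -
  assume "a \<in> A m" "b \<in> A n"
  moreover have "\<forall>m n a b. a \<in> A m \<and> b \<in> A n \<longrightarrow>
        a \<otimes> b = (if even (m * n) then b \<otimes> a else \<ominus> (b \<otimes> a))"
    using g_unf by (elim conjE) assumption
  ultimately show ?thesis by (elim allE[of _ m] allE[of _ n] allE[of _ a] allE[of _ b]) simp
qed

lemma charp: "add_pow R p \<one> = \<zero>"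
  using g_unf by (elim conjE) assumption

lemma p_gt1: "p > 1" using prime_p prime_gt_1_nat by blast

lemma A_pow: "a \<in> A m \<Longrightarrow> a [^] n \<in> A (int n * m)"
proof (induction n)
  case 0 then show ?case using A_one by simp
next
  case (Suc n)
  then have "a [^] n \<otimes> a \<in> A (int n * m + m)" using A_mult by blast
  then show ?case by (simp add: algebra_simps)
qed

lemma A_finsum: "finite I \<Longrightarrow> (\<And>i. i \<in> I \<Longrightarrow> f i \<in> A n) \<Longrightarrow> finsum R f I \<in> A n"
proof (induction I rule: finite_induct)
  case empty then show ?case by simp
next
  case (insert x F)
  then have "finsum R f (insert x F) = f x \<oplus> finsum R f F"
    by (intro finsum_insert) (auto intro: A_carrier)
  then show ?case using insert A_add by auto
qed

lemma char2_neg: assumes "p = 2" "x \<in> carrier R" shows "\<ominus> x = x"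
proof -
  have "\<one> \<oplus> \<one> = \<zero>" using charp assms by (simp add: numeral_2_eq_2)
  then have "x \<oplus> x = \<zero>" using assms l_distr[of \<one> \<one> x] by simp
  then show ?thesis using assms by (metis minus_equality)
qed

definition Zc :: "'a set" where
  "Zc = {x \<in> carrier R. \<forall>y \<in> carrier R. x \<otimes> y = y \<otimes> x}"

lemma Zc_carrier: "x \<in> Zc \<Longrightarrow> x \<in> carrier R" unfolding Zc_def by blast
lemma Zc_comm: "x \<in> Zc \<Longrightarrow> y \<in> carrier R \<Longrightarrow> x \<otimes> y = y \<otimes> x" unfolding Zc_def by blast
lemma Zc_zero[simp]: "\<zero> \<in> Zc" unfolding Zc_def by simp
lemma Zc_one[simp]: "\<one> \<in> Zc" unfolding Zc_def by simp
lemma Zc_add: assumes "x \<in> Zc" "y \<in> Zc" shows "x \<oplus> y \<in> Zc"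
proof -
  have c: "x \<in> carrier R" "y \<in> carrier R" using assms Zc_carrier by auto
  have "(x \<oplus> y) \<otimes> z = z \<otimes> (x \<oplus> y)" if z: "z \<in> carrier R" for z
  proof -
    have "(x \<oplus> y) \<otimes> z = x \<otimes> z \<oplus> y \<otimes> z" using c z by (rule_tac l_distr) auto
    also have "\<dots> = z \<otimes> x \<oplus> z \<otimes> y" using assms z Zc_comm by metis
    also have "\<dots> = z \<otimes> (x \<oplus> y)" using c z by (rule_tac r_distr[symmetric]) auto
    finally show ?thesis .
  qed
  then show ?thesis unfolding Zc_def using c by blast
qed

lemma Zc_mult: assumes "x \<in> Zc" "y \<in> Zc" shows "x \<otimes> y \<in> Zc"
proof -
  have c: "x \<in> carrier R" "y \<in> carrier R" using assms Zc_carrier by auto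
  have "(x \<otimes> y) \<otimes> z = z \<otimes> (x \<otimes> y)" if z: "z \<in> carrier R" for z
  proof -
    have "(x \<otimes> y) \<otimes> z = x \<otimes> (y \<otimes> z)" using c z by (rule_tac m_assoc) auto
    also have "\<dots> = x \<otimes> (z \<otimes> y)" using assms z Zc_comm by metis
    also have "\<dots> = (x \<otimes> z) \<otimes> y" using c z by (rule_tac m_assoc[symmetric]) auto
    also have "\<dots> = (z \<otimes> x) \<otimes> y" using assms z Zc_comm by metis
    also have "\<dots> = z \<otimes> (x \<otimes> y)" using c z by (rule_tac m_assoc) auto
    finally show ?thesis .
  qed
  then show ?thesis unfolding Zc_def using c by blast
qed

lemma Zc_neg: assumes "x \<in> Zc" shows "\<ominus> x \<in> Zc"
proof -
  have c: "x \<in> carrier R" using assms Zc_carrier by auto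
  have "(\<ominus> x) \<otimes> z = z \<otimes> (\<ominus> x)" if z: "z \<in> carrier R" for z
  proof -
    have "(\<ominus> x) \<otimes> z = \<ominus> (x \<otimes> z)" using c z by (rule_tac l_minus) auto
    also have "\<dots> = \<ominus> (z \<otimes> x)" using assms z Zc_comm by metis
    also have "\<dots> = z \<otimes> (\<ominus> x)" using c z by (rule_tac r_minus[symmetric]) auto
    finally show ?thesis .
  qed
  then show ?thesis unfolding Zc_def using c by blast
qed

lemma central_hom:
  assumes a: "a \<in> A m" and par: "p = 2 \<or> even m"
  shows "a \<in> Zc"
proof -
  have comm1: "a \<otimes> b = b \<otimes> a" if b: "b \<in> A n" for b n
  proof (cases "even (m * n)")
    case True then show ?thesis using A_comm[OF a b] by simp
  next
    case False
    then have "p = 2" using par by auto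
    then show ?thesis using A_comm[OF a b] False char2_neg[of "b \<otimes> a"] a b A_carrier by simp
  qed
  have "a \<otimes> y = y \<otimes> a" if y: "y \<in> carrier R" for y
  proof -
    obtain I f where If: "finite I" "\<forall>n\<in>I. f n \<in> A n" "y = (\<Oplus>n\<in>I. f n)"
      using A_decomp[OF y] by blast
    have fc: "f \<in> I \<rightarrow> carrier R" using If A_carrier by blast
    have ac: "a \<in> carrier R" using a A_carrier by blast
    have fcx: "\<And>n. n \<in> I \<Longrightarrow> f n \<in> carrier R" using If A_carrier by blast
    have ce: "\<And>n. n \<in> I \<Longrightarrow> a \<otimes> f n = f n \<otimes> a" using If comm1 by blast
    have "a \<otimes> y = (\<Oplus>n\<in>I. a \<otimes> f n)" using If fc ac by (simp add: finsum_rdistr)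
    also have "\<dots> = (\<Oplus>n\<in>I. f n \<otimes> a)" using fcx ac by (intro finsum_cong) (auto simp: ce)
    also have "\<dots> = y \<otimes> a" using If fc ac by (simp add: finsum_ldistr)
    finally show ?thesis .
  qed
  then show ?thesis unfolding Zc_def using a A_carrier by blast
qed

end



context gca begin

definition Er :: "('a \<times> 'a) ring" where
  "Er = \<lparr>carrier = Zc \<times> carrier R, monoid.mult = eps_mult R, one = (\<one>, \<zero>), ring.zero = (\<zero>, \<zero>),
         add = (\<lambda>x y. (fst x \<oplus> fst y, snd x \<oplus> snd y))\<rparr>"

lemma Er_carrier: "carrier Er = Zc \<times> carrier R" unfolding Er_def by simp
lemma Er_mult: "x \<otimes>\<^bsub>Er\<^esub> y = eps_mult R x y" unfolding Er_def by simp
lemma Er_one: "\<one>\<^bsub>Er\<^esub> = (\<one>, \<zero>)" unfolding Er_def by simp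
lemma Er_zero: "\<zero>\<^bsub>Er\<^esub> = (\<zero>, \<zero>)" unfolding Er_def by simp
lemma Er_add: "x \<oplus>\<^bsub>Er\<^esub> y = (fst x \<oplus> fst y, snd x \<oplus> snd y)" unfolding Er_def by simp

lemma Er_mem: "x \<in> carrier Er \<longleftrightarrow> fst x \<in> Zc \<and> snd x \<in> carrier R"
  unfolding Er_carrier by (cases x) auto

lemma Zc_c: "x \<in> Zc \<Longrightarrow> x \<in> carrier R" by (rule Zc_carrier)

lemma Er_cring: "cring Er"
proof (rule cringI)
  show "abelian_group Er"
  proof (rule abelian_groupI)
    fix x y z assume x: "x \<in> carrier Er" and y: "y \<in> carrier Er" and z: "z \<in> carrier Er"
    then have c: "fst x \<in> Zc" "snd x \<in> carrier R" "fst y \<in> Zc" "snd y \<in> carrier R"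
      "fst z \<in> Zc" "snd z \<in> carrier R" by (auto simp: Er_mem)
    then have cc: "fst x \<in> carrier R" "fst y \<in> carrier R" "fst z \<in> carrier R" by (auto intro: Zc_c)
    show "x \<oplus>\<^bsub>Er\<^esub> y \<in> carrier Er" using c by (simp add: Er_add Er_mem Zc_add)
    show "x \<oplus>\<^bsub>Er\<^esub> y \<oplus>\<^bsub>Er\<^esub> z = x \<oplus>\<^bsub>Er\<^esub> (y \<oplus>\<^bsub>Er\<^esub> z)"
      using c cc by (simp add: Er_add a_assoc)
    show "x \<oplus>\<^bsub>Er\<^esub> y = y \<oplus>\<^bsub>Er\<^esub> x" using c cc by (simp add: Er_add a_comm)
    show "\<zero>\<^bsub>Er\<^esub> \<oplus>\<^bsub>Er\<^esub> x = x" using c cc by (simp add: Er_add Er_zero)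
    show "\<exists>y\<in>carrier Er. y \<oplus>\<^bsub>Er\<^esub> x = \<zero>\<^bsub>Er\<^esub>"
      using c cc by (intro bexI[of _ "(\<ominus> fst x, \<ominus> snd x)"]) (auto simp: Er_add Er_zero Er_mem Zc_neg l_neg)
  next
    show "\<zero>\<^bsub>Er\<^esub> \<in> carrier Er" by (simp add: Er_zero Er_mem)
  qed
next
  show "comm_monoid Er"
  proof (rule comm_monoidI)
    fix x y z assume x: "x \<in> carrier Er" and y: "y \<in> carrier Er" and z: "z \<in> carrier Er"
    then have c: "fst x \<in> Zc" "snd x \<in> carrier R" "fst y \<in> Zc" "snd y \<in> carrier R"
      "fst z \<in> Zc" "snd z \<in> carrier R" by (auto simp: Er_mem)
    then have cc: "fst x \<in> carrier R" "fst y \<in> carrier R" "fst z \<in> carrier R" by (auto intro: Zc_c)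
    show "x \<otimes>\<^bsub>Er\<^esub> y \<in> carrier Er" using c cc by (simp add: Er_mult eps_mult_def Er_mem Zc_mult)
    show "x \<otimes>\<^bsub>Er\<^esub> y \<otimes>\<^bsub>Er\<^esub> z = x \<otimes>\<^bsub>Er\<^esub> (y \<otimes>\<^bsub>Er\<^esub> z)"
      using c cc by (simp add: Er_mult eps_mult_def m_assoc l_distr r_distr a_assoc)
    show "\<one>\<^bsub>Er\<^esub> \<otimes>\<^bsub>Er\<^esub> x = x" using c cc by (simp add: Er_mult eps_mult_def Er_one)
    have "fst x \<otimes> fst y = fst y \<otimes> fst x" "fst x \<otimes> snd y = snd y \<otimes> fst x"
      "snd x \<otimes> fst y = fst y \<otimes> snd x" using c cc by (auto intro: Zc_comm[symmetric] Zc_comm)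
    then show "x \<otimes>\<^bsub>Er\<^esub> y = y \<otimes>\<^bsub>Er\<^esub> x" using c cc
      by (simp add: Er_mult eps_mult_def a_comm)
  next
    show "\<one>\<^bsub>Er\<^esub> \<in> carrier Er" by (simp add: Er_one Er_mem)
  qed
next
  fix x y z assume x: "x \<in> carrier Er" and y: "y \<in> carrier Er" and z: "z \<in> carrier Er"
  then have c: "fst x \<in> Zc" "snd x \<in> carrier R" "fst y \<in> Zc" "snd y \<in> carrier R"
    "fst z \<in> Zc" "snd z \<in> carrier R" by (auto simp: Er_mem)
  then have cc: "fst x \<in> carrier R" "fst y \<in> carrier R" "fst z \<in> carrier R" by (auto intro: Zc_c)
  show "(x \<oplus>\<^bsub>Er\<^esub> y) \<otimes>\<^bsub>Er\<^esub> z = x \<otimes>\<^bsub>Er\<^esub> z \<oplus>\<^bsub>Er\<^esub> y \<otimes>\<^bsub>Er\<^esub> z"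
    using c cc by (simp add: Er_mult Er_add eps_mult_def l_distr a_ac)
qed

end

sublocale gca \<subseteq> E: cring Er by (rule Er_cring)




context gca begin

lemma Er_finsum:
  assumes "finite I" "f \<in> I \<rightarrow> carrier Er"
  shows "finsum Er f I = (\<Oplus>i\<in>I. fst (f i), \<Oplus>i\<in>I. snd (f i))"
  using assms
proof (induction I rule: finite_induct)
  case empty then show ?case by (simp add: Er_zero)
next
  case (insert x F)
  have fx: "f x \<in> carrier Er" and fF: "f \<in> F \<rightarrow> carrier Er" using insert by auto
  have c1: "(\<lambda>i. fst (f i)) \<in> F \<rightarrow> carrier R" "(\<lambda>i. snd (f i)) \<in> F \<rightarrow> carrier R"
    using fF unfolding Pi_iff Er_mem by (auto intro: Zc_c)
  have c2: "fst (f x) \<in> carrier R" "snd (f x) \<in> carrier R" using fx by (auto simp: Er_mem intro: Zc_c)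
  have "finsum Er f (insert x F) = f x \<oplus>\<^bsub>Er\<^esub> finsum Er f F"
    using insert fx fF by (intro E.finsum_insert) auto
  also have "\<dots> = (fst (f x) \<oplus> (\<Oplus>i\<in>F. fst (f i)), snd (f x) \<oplus> (\<Oplus>i\<in>F. snd (f i)))"
    using insert fF by (simp add: Er_add)
  also have "\<dots> = (\<Oplus>i\<in>insert x F. fst (f i), \<Oplus>i\<in>insert x F. snd (f i))"
    using insert c1 c2 by (simp add: finsum_insert)
  finally show ?case .
qed

lemma eps_pow_Er:
  assumes x: "x \<in> carrier Er"
  shows "eps_pow R x n = x [^]\<^bsub>Er\<^esub> n"
proof (induction n)
  case 0 then show ?case by (simp add: eps_pow_def Er_one)
next
  case (Suc n)
  have "eps_pow R x (Suc n) = eps_mult R x (eps_pow R x n)" by (simp add: eps_pow_def)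
  also have "\<dots> = x \<otimes>\<^bsub>Er\<^esub> x [^]\<^bsub>Er\<^esub> n" using Suc by (simp add: Er_mult)
  also have "\<dots> = x [^]\<^bsub>Er\<^esub> Suc n" using x by (simp add: E.m_comm)
  finally show ?case .
qed

definition Fr :: "nat \<Rightarrow> 'a \<times> 'a \<Rightarrow> 'a \<times> 'a" where
  "Fr j x = x [^]\<^bsub>Er\<^esub> (p ^ j)"

definition gm :: "(nat \<Rightarrow> 'a \<times> 'a) \<Rightarrow> (nat \<Rightarrow> 'a \<times> 'a) \<Rightarrow> nat \<Rightarrow> 'a \<times> 'a" where
  "gm a b i = (\<Oplus>\<^bsub>Er\<^esub> j\<in>{..i}. Fr j (a (i - j)) \<otimes>\<^bsub>Er\<^esub> b j)"

definition SC :: "(nat \<Rightarrow> 'a \<times> 'a) set" where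
  "SC = {a. \<forall>i. a i \<in> carrier Er}"

lemma Fr_closed[simp]: "x \<in> carrier Er \<Longrightarrow> Fr j x \<in> carrier Er"
  unfolding Fr_def by simp

lemma Gp_mult_gm:
  assumes "a \<in> SC" "b \<in> SC"
  shows "Gp_mult p R a b = gm a b"
proof
  fix i
  have c: "(\<lambda>j. Fr j (a (i - j)) \<otimes>\<^bsub>Er\<^esub> b j) \<in> {..i} \<rightarrow> carrier Er"
    using assms by (auto simp: SC_def)
  show "Gp_mult p R a b i = gm a b i"
    unfolding gm_def Er_finsum[OF finite_atMost c] Gp_mult_def
    using assms by (simp add: eps_pow_Er SC_def Fr_def Er_mult)
qed

lemma Er_add_pow: "add_pow Er (n::nat) x = (add_pow R n (fst x), add_pow R n (snd x))"
proof (induction n)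
  case 0 then show ?case by (simp add: Er_zero)
next
  case (Suc n) then show ?case by (simp add: Er_add)
qed

lemma Er_char: "add_pow Er p \<one>\<^bsub>Er\<^esub> = \<zero>\<^bsub>Er\<^esub>"
  by (simp add: Er_add_pow Er_one Er_zero charp)

lemma Fr_0[simp]: "x \<in> carrier Er \<Longrightarrow> Fr 0 x = x" by (simp add: Fr_def)

lemma Fr_Suc: "x \<in> carrier Er \<Longrightarrow> Fr (Suc j) x = (Fr j x) [^]\<^bsub>Er\<^esub> p"
  by (simp add: Fr_def E.nat_pow_pow mult.commute)

lemma Fr_add: "x \<in> carrier Er \<Longrightarrow> y \<in> carrier Er \<Longrightarrow> Fr j (x \<oplus>\<^bsub>Er\<^esub> y) = Fr j x \<oplus>\<^bsub>Er\<^esub> Fr j y"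
proof (induction j)
  case 0 then show ?case by simp
next
  case (Suc j) then show ?case
    by (simp add: Fr_Suc E.frobenius_alg[OF _ _ prime_p Er_char])
qed

lemma Fr_mult: "x \<in> carrier Er \<Longrightarrow> y \<in> carrier Er \<Longrightarrow> Fr j (x \<otimes>\<^bsub>Er\<^esub> y) = Fr j x \<otimes>\<^bsub>Er\<^esub> Fr j y"
  by (simp add: Fr_def E.nat_pow_distrib)

lemma Fr_Fr: "x \<in> carrier Er \<Longrightarrow> Fr j (Fr l x) = Fr (l + j) x"
  by (simp add: Fr_def E.nat_pow_pow power_add)

lemma Fr_one[simp]: "Fr j \<one>\<^bsub>Er\<^esub> = \<one>\<^bsub>Er\<^esub>" by (simp add: Fr_def)

lemma p_pos: "p ^ j \<noteq> 0" using p_gt1 by simp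

lemma Fr_zero[simp]: "Fr j \<zero>\<^bsub>Er\<^esub> = \<zero>\<^bsub>Er\<^esub>" using p_pos by (simp add: Fr_def E.nat_pow_zero)

lemma Fr_finsum:
  assumes "finite I" "f \<in> I \<rightarrow> carrier Er"
  shows "Fr j (finsum Er f I) = finsum Er (\<lambda>i. Fr j (f i)) I"
  using assms
proof (induction I rule: finite_induct)
  case empty then show ?case by simp
next
  case (insert x F)
  have fx: "f x \<in> carrier Er" and fF: "f \<in> F \<rightarrow> carrier Er" using insert by auto
  have "Fr j (finsum Er f (insert x F)) = Fr j (f x \<oplus>\<^bsub>Er\<^esub> finsum Er f F)"
    using insert fx fF by (subst E.finsum_insert) auto
  also have "\<dots> = Fr j (f x) \<oplus>\<^bsub>Er\<^esub> finsum Er (\<lambda>i. Fr j (f i)) F"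
    using fx fF insert by (simp add: Fr_add Pi_iff)
  also have "\<dots> = finsum Er (\<lambda>i. Fr j (f i)) (insert x F)"
    using insert fx fF by (subst E.finsum_insert) (auto simp: Pi_iff)
  finally show ?case .
qed

lemma pow_fst0: "a \<in> Zc \<Longrightarrow> (a, \<zero>) [^]\<^bsub>Er\<^esub> (n::nat) = (a [^] n, \<zero>)"
proof (induction n)
  case 0 then show ?case by (simp add: Er_one)
next
  case (Suc n)
  have "a [^] n \<in> carrier R" using Suc Zc_c by simp
  then show ?case using Suc Zc_c[of a] by (simp add: Er_mult eps_mult_def)
qed

lemma fst_pow: "x \<in> carrier Er \<Longrightarrow> fst (x [^]\<^bsub>Er\<^esub> (n::nat)) = fst x [^] n"
  by (induction n) (simp_all add: Er_one Er_mult eps_mult_def)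

lemma Zc_pow: "a \<in> Zc \<Longrightarrow> a [^] (n::nat) \<in> Zc"
  by (induction n) (auto simp: Zc_mult)

lemma Fr1_pair:
  assumes "a \<in> Zc" "b \<in> carrier R"
  shows "(a, b) [^]\<^bsub>Er\<^esub> p = (a [^] p, \<zero>)"
proof -
  have ab: "(a, b) = (a, \<zero>) \<oplus>\<^bsub>Er\<^esub> (\<zero>, b)" using assms Zc_c by (simp add: Er_add)
  have c: "(a, \<zero>) \<in> carrier Er" "(\<zero>, b) \<in> carrier Er" using assms by (auto simp: Er_mem)
  have sq: "(\<zero>, b) \<otimes>\<^bsub>Er\<^esub> (\<zero>, b) = \<zero>\<^bsub>Er\<^esub>" using assms by (simp add: Er_mult eps_mult_def Er_zero)
  obtain q where q: "p = Suc (Suc q)" using p_gt1 by (metis Suc_diff_Suc less_imp_Suc_add numeral_1_eq_Suc_0 numerals(1) plus_1_eq_Suc)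
  have z: "(\<zero>, b) [^]\<^bsub>Er\<^esub> p = \<zero>\<^bsub>Er\<^esub>"
  proof -
    have "(\<zero>, b) [^]\<^bsub>Er\<^esub> p = (\<zero>, b) [^]\<^bsub>Er\<^esub> q \<otimes>\<^bsub>Er\<^esub> ((\<zero>, b) \<otimes>\<^bsub>Er\<^esub> (\<zero>, b))"
      using c q by (simp add: E.m_assoc)
    then show ?thesis using sq c by simp
  qed
  have "(a, b) [^]\<^bsub>Er\<^esub> p = ((a, \<zero>) \<oplus>\<^bsub>Er\<^esub> (\<zero>, b)) [^]\<^bsub>Er\<^esub> p" using ab by metis
  also have "\<dots> = (a, \<zero>) [^]\<^bsub>Er\<^esub> p \<oplus>\<^bsub>Er\<^esub> (\<zero>, b) [^]\<^bsub>Er\<^esub> p"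
    by (rule E.frobenius_alg[OF c prime_p Er_char])
  also have "\<dots> = (a [^] p, \<zero>)" using z pow_fst0[OF assms(1), of p] assms Zc_pow[of a p] Zc_c
    by (simp add: Er_add Er_zero)
  finally show ?thesis .
qed

lemma Fr_pos_pair:
  assumes "x \<in> carrier Er" "j > 0"
  shows "Fr j x = (fst x [^] (p ^ j), \<zero>)"
  using assms(2)
proof (induction j)
  case 0 then show ?case by simp
next
  case (Suc j)
  show ?case
  proof (cases "j = 0")
    case True
    then show ?thesis using assms Fr1_pair[of "fst x" "snd x"]
      by (simp add: Fr_def Er_mem)
  next
    case False
    then have e: "Fr j x = (fst x [^] (p ^ j), \<zero>)" using Suc by simp
    have "fst x [^] (p ^ j) \<in> Zc" using assms by (simp add: Er_mem Zc_pow)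
    then show ?thesis using Fr_Suc[OF assms(1), of j] e Fr1_pair[of "fst x [^] (p ^ j)" \<zero>] assms
      by (simp add: Er_mem nat_pow_pow Zc_c power_Suc mult.commute)
  qed
qed

end



lemma (in abelian_monoid) finsum_triangle:
  assumes h: "\<And>j m. h j m \<in> carrier G"
  shows "(\<Oplus>j\<in>{..(i::nat)}. \<Oplus>l\<in>{..i-j}. h j (j+l)) = (\<Oplus>m\<in>{..i}. \<Oplus>j\<in>{..m}. h j m)"
proof (induction i)
  case 0 then show ?case using h by simp
next
  case (Suc i)
  have in1: "(\<Oplus>l\<in>{..Suc i - j}. h j (j+l)) = h j (Suc i) \<oplus> (\<Oplus>l\<in>{..i-j}. h j (j+l))"
    if "j \<in> {..i}" for j
  proof -
    have "Suc i - j = Suc (i - j)" using that by auto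
    then show ?thesis using h that by (simp add: finsum_Suc)
  qed
  have "(\<Oplus>j\<in>{..Suc i}. \<Oplus>l\<in>{..Suc i-j}. h j (j+l))
      = (\<Oplus>l\<in>{..Suc i - Suc i}. h (Suc i) (Suc i + l)) \<oplus> (\<Oplus>j\<in>{..i}. \<Oplus>l\<in>{..Suc i-j}. h j (j+l))"
    using h by (subst finsum_Suc) auto
  also have "(\<Oplus>l\<in>{..Suc i - Suc i}. h (Suc i) (Suc i + l)) = h (Suc i) (Suc i)"
    using h by simp
  also have "(\<Oplus>j\<in>{..i}. \<Oplus>l\<in>{..Suc i-j}. h j (j+l))
      = (\<Oplus>j\<in>{..i}. h j (Suc i) \<oplus> (\<Oplus>l\<in>{..i-j}. h j (j+l)))"
    using h in1 by (intro finsum_cong) auto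
  also have "\<dots> = (\<Oplus>j\<in>{..i}. h j (Suc i)) \<oplus> (\<Oplus>j\<in>{..i}. \<Oplus>l\<in>{..i-j}. h j (j+l))"
    using h by (subst finsum_addf) auto
  also have "(\<Oplus>j\<in>{..i}. \<Oplus>l\<in>{..i-j}. h j (j+l)) = (\<Oplus>m\<in>{..i}. \<Oplus>j\<in>{..m}. h j m)"
    by (rule Suc)
  finally have L: "(\<Oplus>j\<in>{..Suc i}. \<Oplus>l\<in>{..Suc i-j}. h j (j+l)) =
     h (Suc i) (Suc i) \<oplus> ((\<Oplus>j\<in>{..i}. h j (Suc i)) \<oplus> (\<Oplus>m\<in>{..i}. \<Oplus>j\<in>{..m}. h j m))" .
  have "(\<Oplus>m\<in>{..Suc i}. \<Oplus>j\<in>{..m}. h j m) = (\<Oplus>j\<in>{..Suc i}. h j (Suc i)) \<oplus> (\<Oplus>m\<in>{..i}. \<Oplus>j\<in>{..m}. h j m)"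
    using h by (subst finsum_Suc) auto
  also have "(\<Oplus>j\<in>{..Suc i}. h j (Suc i)) = h (Suc i) (Suc i) \<oplus> (\<Oplus>j\<in>{..i}. h j (Suc i))"
    using h by (subst finsum_Suc) auto
  finally show ?case unfolding L using h by (simp add: a_assoc)
qed

context gca begin

lemma SC_mem: "a \<in> SC \<Longrightarrow> a i \<in> carrier Er" unfolding SC_def by blast

lemma gm_closed: "a \<in> SC \<Longrightarrow> b \<in> SC \<Longrightarrow> gm a b \<in> SC"
  unfolding SC_def gm_def by (auto intro!: E.finsum_closed)

lemma gm_assoc:
  assumes a: "a \<in> SC" and b: "b \<in> SC" and c: "c \<in> SC"
  shows "gm (gm a b) c = gm a (gm b c)"
proof
  fix i
  note [simp] = SC_mem[OF a] SC_mem[OF b] SC_mem[OF c]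
  define H where "H j m = Fr m (a (i - m)) \<otimes>\<^bsub>Er\<^esub> Fr j (b (m - j)) \<otimes>\<^bsub>Er\<^esub> c j" for j m
  have H: "H j m \<in> carrier Er" for j m unfolding H_def by simp
  have "gm (gm a b) c i = (\<Oplus>\<^bsub>Er\<^esub>j\<in>{..i}. Fr j (gm a b (i - j)) \<otimes>\<^bsub>Er\<^esub> c j)"
    by (simp add: gm_def)
  also have "\<dots> = (\<Oplus>\<^bsub>Er\<^esub>j\<in>{..i}. \<Oplus>\<^bsub>Er\<^esub>l\<in>{..i-j}. H j (j + l))"
  proof -
   have eq: "Fr j (gm a b (i - j)) \<otimes>\<^bsub>Er\<^esub> c j = (\<Oplus>\<^bsub>Er\<^esub>l\<in>{..i-j}. H j (j + l))" for j
   proof -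
    have "Fr j (gm a b (i - j)) = (\<Oplus>\<^bsub>Er\<^esub>l\<in>{..i-j}. Fr j (Fr l (a (i - j - l)) \<otimes>\<^bsub>Er\<^esub> b l))"
      unfolding gm_def by (subst Fr_finsum) auto
    also have "\<dots> = (\<Oplus>\<^bsub>Er\<^esub>l\<in>{..i-j}. Fr (l + j) (a (i - j - l)) \<otimes>\<^bsub>Er\<^esub> Fr j (b l))"
      by (intro E.finsum_cong) (auto simp: Fr_mult Fr_Fr)
    finally have e: "Fr j (gm a b (i - j)) = (\<Oplus>\<^bsub>Er\<^esub>l\<in>{..i-j}. Fr (l + j) (a (i - j - l)) \<otimes>\<^bsub>Er\<^esub> Fr j (b l))" .
    show "Fr j (gm a b (i - j)) \<otimes>\<^bsub>Er\<^esub> c j = (\<Oplus>\<^bsub>Er\<^esub>l\<in>{..i-j}. H j (j + l))"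
      unfolding e H_def by (subst E.finsum_ldistr) (auto intro!: E.finsum_cong simp: add.commute diff_diff_left)
   qed
   show ?thesis by (intro E.finsum_cong) (auto simp: eq gm_closed a b H intro!: E.finsum_closed)
  qed
  also have "\<dots> = (\<Oplus>\<^bsub>Er\<^esub>m\<in>{..i}. \<Oplus>\<^bsub>Er\<^esub>j\<in>{..m}. H j m)"
    by (rule E.finsum_triangle[OF H])
  also have "\<dots> = gm a (gm b c) i"
    unfolding gm_def H_def
    by (auto intro!: E.finsum_cong simp: E.finsum_rdistr E.m_assoc)
  finally show "gm (gm a b) c i = gm a (gm b c) i" .
qed

definition one_seq :: "nat \<Rightarrow> 'a \<times> 'a" where
  "one_seq i = (if i = 0 then \<one>\<^bsub>Er\<^esub> else \<zero>\<^bsub>Er\<^esub>)"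

lemma one_seq_SC: "one_seq \<in> SC" unfolding SC_def one_seq_def by auto

lemma gm_one: assumes b: "b \<in> SC" shows "gm one_seq b = b"
proof
  fix i
  note [simp] = SC_mem[OF b]
  have "gm one_seq b i = Fr i (one_seq (i - i)) \<otimes>\<^bsub>Er\<^esub> b i"
    unfolding gm_def
    by (rule E.finsum_nz1) (auto simp: one_seq_def)
  then show "gm one_seq b i = b i" by (simp add: one_seq_def)
qed

end



context gca begin

abbreviation d :: "nat \<Rightarrow> int" where "d i \<equiv> coeff_deg p i"

definition Sd :: "nat \<Rightarrow> 'a set" where
  "Sd i = (if p = 2 then {\<zero>} else A (d i + 1))"

definition dok :: "'a \<times> 'a \<Rightarrow> nat \<Rightarrow> bool" where
  "dok x i \<longleftrightarrow> fst x \<in> A (d i) \<and> snd x \<in> Sd i"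

lemma Gp_carrier_dok: "Gp_carrier p R A = {a. (\<forall>i. dok (a i) i) \<and> fst (a 0) = \<one>}"
  unfolding Gp_carrier_def dok_def Sd_def by auto

lemma d0: "d 0 = 0" by (simp add: coeff_deg_def)

lemma d_even: "p \<noteq> 2 \<Longrightarrow> even (d i)" by (simp add: coeff_deg_def)

lemma d_rel: "j \<le> i \<Longrightarrow> int (p ^ j) * d (i - j) + d j = d i"
proof -
  assume "j \<le> i"
  then have e: "\<And>x::int. x ^ j * x ^ (i - j) = x ^ i" by (simp add: power_add[symmetric])
  then show ?thesis by (simp add: coeff_deg_def algebra_simps)
qed

lemma Sd_carrier: "y \<in> Sd i \<Longrightarrow> y \<in> carrier R"
  unfolding Sd_def by (auto split: if_splits intro: A_carrier)

lemma dok_Er: "dok x i \<Longrightarrow> x \<in> carrier Er"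
  unfolding dok_def Er_mem
  using central_hom[of "fst x" "d i"] d_even[of i] Sd_carrier by auto

lemma dok_add: "dok x i \<Longrightarrow> dok y i \<Longrightarrow> dok (x \<oplus>\<^bsub>Er\<^esub> y) i"
  unfolding dok_def Er_add Sd_def by (auto split: if_splits intro: A_add)

lemma dok_zero: "dok \<zero>\<^bsub>Er\<^esub> i"
  unfolding dok_def Er_zero Sd_def by auto

lemma Er_neg: "x \<in> carrier Er \<Longrightarrow> \<ominus>\<^bsub>Er\<^esub> x = (\<ominus> fst x, \<ominus> snd x)"
proof -
  assume x: "x \<in> carrier Er"
  then have c: "fst x \<in> carrier R" "snd x \<in> carrier R" "fst x \<in> Zc" by (auto simp: Er_mem intro: Zc_c)
  have m: "(\<ominus> fst x, \<ominus> snd x) \<in> carrier Er" using c by (simp add: Er_mem Zc_neg)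
  have "(\<ominus> fst x, \<ominus> snd x) \<oplus>\<^bsub>Er\<^esub> x = \<zero>\<^bsub>Er\<^esub>" using c by (simp add: Er_add Er_zero l_neg)
  then show ?thesis using E.minus_equality[OF _ x m] by simp
qed

lemma dok_neg: "dok x i \<Longrightarrow> dok (\<ominus>\<^bsub>Er\<^esub> x) i"
  using dok_Er[of x i] unfolding dok_def by (auto simp: Er_neg Sd_def split: if_splits intro: A_neg)

lemma dok_finsum: "finite I \<Longrightarrow> (\<And>j. j \<in> I \<Longrightarrow> dok (f j) i) \<Longrightarrow> dok (finsum Er f I) i"
proof (induction I rule: finite_induct)
  case empty then show ?case by (simp add: dok_zero)
next
  case (insert x F)
  then have "finsum Er f (insert x F) = f x \<oplus>\<^bsub>Er\<^esub> finsum Er f F"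
    by (intro E.finsum_insert) (auto intro: dok_Er)
  then show ?case using insert dok_add by auto
qed

lemma pow_A: "a \<in> A m \<Longrightarrow> a [^] (n::nat) \<in> A (int n * m)" by (rule A_pow)

lemma dok_Fr:
  assumes "dok x k"
  shows "fst (Fr j x) \<in> A (int (p ^ j) * d k) \<and>
         snd (Fr j x) \<in> (if p = 2 then {\<zero>} else A (int (p ^ j) * d k + 1))"
proof (cases "j = 0")
  case True then show ?thesis using assms dok_Er[OF assms] by (simp add: dok_def Sd_def split: if_splits)
next
  case False
  then have "Fr j x = (fst x [^] (p ^ j), \<zero>)" using Fr_pos_pair[OF dok_Er[OF assms]] by simp
  then show ?thesis using assms pow_A[of "fst x" "d k" "p ^ j"] by (simp add: dok_def)
qed

lemma dok_prod:
  assumes x: "dok x k" and y: "dok y j"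
  shows "dok (Fr j x \<otimes>\<^bsub>Er\<^esub> y) (k + j)"
proof -
  have e: "int (p ^ j) * d k + d j = d (k + j)" using d_rel[of j "k + j"] by simp
  obtain f1 f2 where f: "Fr j x = (f1, f2)" by (cases "Fr j x")
  have f1: "f1 \<in> A (int (p ^ j) * d k)" and f2: "f2 \<in> (if p = 2 then {\<zero>} else A (int (p ^ j) * d k + 1))"
    using dok_Fr[OF x, of j] f by auto
  have y1: "fst y \<in> A (d j)" and y2: "snd y \<in> Sd j" using y by (auto simp: dok_def)
  have c: "f1 \<in> carrier R" "fst y \<in> carrier R" using f1 y1 by (auto intro: A_carrier)
  have fst: "f1 \<otimes> fst y \<in> A (d (k + j))" using A_mult[OF f1 y1] e by simp
  have snd: "f1 \<otimes> snd y \<oplus> f2 \<otimes> fst y \<in> Sd (k + j)"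
  proof (cases "p = 2")
    case True then show ?thesis using f2 y2 c unfolding Sd_def by simp
  next
    case False
    have a1: "f1 \<otimes> snd y \<in> A (d (k + j) + 1)"
    proof -
      have ee: "int (p ^ j) * d k + (d j + 1) = d (k + j) + 1" using e by linarith
      have "snd y \<in> A (d j + 1)" using y2 False by (simp add: Sd_def)
      then show ?thesis using A_mult[OF f1, of "snd y" "d j + 1"] ee by metis
    qed
    have a2: "f2 \<otimes> fst y \<in> A (d (k + j) + 1)"
      using A_mult[of f2 "int (p ^ j) * d k + 1" "fst y" "d j"] f2 y1 False e by (simp add: algebra_simps)
    show ?thesis using A_add[OF a1 a2] False by (simp add: Sd_def)
  qed
  show ?thesis unfolding dok_def f using fst snd by (simp add: Er_mult eps_mult_def)
qed

lemma Gp_carrier_SC: "a \<in> Gp_carrier p R A \<Longrightarrow> a \<in> SC"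
  unfolding Gp_carrier_dok SC_def using dok_Er by blast

lemma gm_dok:
  assumes a: "\<And>i. dok (a i) i" and b: "\<And>i. dok (b i) i"
  shows "dok (gm a b i) i"
  unfolding gm_def
proof (rule dok_finsum)
  fix j assume "j \<in> {..i}"
  then show "dok (Fr j (a (i - j)) \<otimes>\<^bsub>Er\<^esub> b j) i" using dok_prod[OF a[of "i - j"] b[of j]] by simp
qed simp

lemma gm_0: "a \<in> SC \<Longrightarrow> b \<in> SC \<Longrightarrow> gm a b 0 = a 0 \<otimes>\<^bsub>Er\<^esub> b 0"
  unfolding gm_def by (simp add: SC_mem)

lemma gm_Gp_carrier:
  assumes a: "a \<in> Gp_carrier p R A" and b: "b \<in> Gp_carrier p R A"
  shows "gm a b \<in> Gp_carrier p R A"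
proof -
  have "fst (gm a b 0) = \<one>"
    using a b gm_0[OF Gp_carrier_SC[OF a] Gp_carrier_SC[OF b]]
    by (simp add: Gp_carrier_dok Er_mult eps_mult_def)
  then show ?thesis using a b gm_dok unfolding Gp_carrier_dok by auto
qed

end



context gca begin

definition uinv :: "(nat \<Rightarrow> 'a \<times> 'a) \<Rightarrow> 'a \<times> 'a" where
  "uinv x = (\<one>, \<ominus> snd (x 0))"

definition zstep :: "(nat \<Rightarrow> 'a \<times> 'a) \<Rightarrow> (nat \<Rightarrow> 'a \<times> 'a) \<Rightarrow> nat \<Rightarrow> 'a \<times> 'a" where
  "zstep x f n = (if n = 0 then uinv x
     else (\<ominus>\<^bsub>Er\<^esub> (\<Oplus>\<^bsub>Er\<^esub>j\<in>{1..n}. Fr j (f (n - j)) \<otimes>\<^bsub>Er\<^esub> x j)) \<otimes>\<^bsub>Er\<^esub> uinv x)"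

primrec zpre :: "(nat \<Rightarrow> 'a \<times> 'a) \<Rightarrow> nat \<Rightarrow> nat \<Rightarrow> 'a \<times> 'a" where
  "zpre x 0 = (\<lambda>_. \<zero>\<^bsub>Er\<^esub>)"
| "zpre x (Suc n) = (zpre x n)(n := zstep x (zpre x n) n)"

definition zinv :: "(nat \<Rightarrow> 'a \<times> 'a) \<Rightarrow> nat \<Rightarrow> 'a \<times> 'a" where
  "zinv x i = zpre x (Suc i) i"

lemma uinv_closed: "x \<in> SC \<Longrightarrow> uinv x \<in> carrier Er"
  using SC_mem[of x 0] by (simp add: uinv_def Er_mem)

lemma zstep_closed: "x \<in> SC \<Longrightarrow> f \<in> SC \<Longrightarrow> zstep x f n \<in> carrier Er"
  unfolding zstep_def using uinv_closed[of x]
  by (auto intro!: E.finsum_closed simp: SC_mem)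

lemma zpre_SC: "x \<in> SC \<Longrightarrow> zpre x n \<in> SC"
proof (induction n)
  case 0 then show ?case by (simp add: SC_def)
next
  case (Suc n) then show ?case using zstep_closed[of x "zpre x n" n] by (simp add: SC_def)
qed

lemma zpre_stable: "j < n \<Longrightarrow> zpre x n j = zinv x j"
proof (induction n)
  case 0 then show ?case by simp
next
  case (Suc n) then show ?case
    by (cases "j = n") (simp_all add: zinv_def)
qed

lemma zinv_SC: assumes "x \<in> SC" shows "zinv x \<in> SC"
  unfolding SC_def zinv_def using SC_mem[OF zpre_SC[OF assms]] by blast

lemma zinv_rec: assumes x: "x \<in> SC" shows "zinv x n = zstep x (zinv x) n"
proof -
  have "zinv x n = zstep x (zpre x n) n" by (simp add: zinv_def)
  also have "\<dots> = zstep x (zinv x) n"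
  proof (cases "n = 0")
    case True then show ?thesis by (simp add: zstep_def)
  next
    case False
    have "(\<Oplus>\<^bsub>Er\<^esub>j\<in>{1..n}. Fr j (zpre x n (n - j)) \<otimes>\<^bsub>Er\<^esub> x j)
        = (\<Oplus>\<^bsub>Er\<^esub>j\<in>{1..n}. Fr j (zinv x (n - j)) \<otimes>\<^bsub>Er\<^esub> x j)"
      using x zinv_SC[OF x] by (intro E.finsum_cong) (auto simp: zpre_stable SC_mem)
    then show ?thesis by (simp add: zstep_def)
  qed
  finally show ?thesis .
qed

lemma uinv_mult: assumes "x \<in> Gp_carrier p R A" shows "uinv x \<otimes>\<^bsub>Er\<^esub> x 0 = \<one>\<^bsub>Er\<^esub>"
proof -
  have x0: "x 0 \<in> carrier Er" "fst (x 0) = \<one>" using Gp_carrier_SC[OF assms] SC_mem assms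
    by (auto simp: Gp_carrier_def)
  then have "snd (x 0) \<in> carrier R" by (simp add: Er_mem)
  then show ?thesis using x0 by (simp add: uinv_def Er_mult eps_mult_def Er_one l_neg r_neg)
qed

lemma zinv_inv:
  assumes xG: "x \<in> Gp_carrier p R A"
  shows "gm (zinv x) x = one_seq"
proof
  fix i
  have x: "x \<in> SC" using Gp_carrier_SC[OF xG] .
  have z: "zinv x \<in> SC" using zinv_SC[OF x] .
  note [simp] = SC_mem[OF x] SC_mem[OF z] uinv_closed[OF x]
  show "gm (zinv x) x i = one_seq i"
  proof (cases "i = 0")
    case True
    then show ?thesis using gm_0[OF z x] zinv_rec[OF x, of 0] uinv_mult[OF xG]
      by (simp add: zstep_def one_seq_def)
  next
    case False
    define S where "S = (\<Oplus>\<^bsub>Er\<^esub>j\<in>{1..i}. Fr j (zinv x (i - j)) \<otimes>\<^bsub>Er\<^esub> x j)"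
    have S: "S \<in> carrier Er" unfolding S_def by (auto intro!: E.finsum_closed)
    have zi: "zinv x i = (\<ominus>\<^bsub>Er\<^esub> S) \<otimes>\<^bsub>Er\<^esub> uinv x"
      using zinv_rec[OF x, of i] False by (simp add: zstep_def S_def)
    have "{..i} = insert 0 {1..i}" by auto
    then have "gm (zinv x) x i = Fr 0 (zinv x (i - 0)) \<otimes>\<^bsub>Er\<^esub> x 0 \<oplus>\<^bsub>Er\<^esub> S"
      unfolding gm_def S_def by (simp add: E.finsum_insert)
    also have "\<dots> = (\<ominus>\<^bsub>Er\<^esub> S) \<oplus>\<^bsub>Er\<^esub> S"
      using S uinv_mult[OF xG] by (simp add: zi E.m_assoc)
    also have "\<dots> = \<zero>\<^bsub>Er\<^esub>" using S by (simp add: E.l_neg)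
    finally show ?thesis using False by (simp add: one_seq_def)
  qed
qed

lemma zinv_Gp_carrier:
  assumes xG: "x \<in> Gp_carrier p R A"
  shows "zinv x \<in> Gp_carrier p R A"
proof -
  have x: "x \<in> SC" using Gp_carrier_SC[OF xG] .
  have xd: "\<And>i. dok (x i) i" using xG by (simp add: Gp_carrier_dok)
  have ud: "dok (uinv x) 0"
  proof -
    have "snd (x 0) \<in> Sd 0" using xd[of 0] by (simp add: dok_def)
    then show ?thesis by (auto simp: dok_def uinv_def d0 A_one Sd_def split: if_splits intro: A_neg)
  qed
  have "dok (zinv x i) i" for i
  proof (induction i rule: less_induct)
    case (less i)
    show ?case
    proof (cases "i = 0")
      case True then show ?thesis using zinv_rec[OF x, of 0] ud by (simp add: zstep_def)
    next
      case False
      define S where "S = (\<Oplus>\<^bsub>Er\<^esub>j\<in>{1..i}. Fr j (zinv x (i - j)) \<otimes>\<^bsub>Er\<^esub> x j)"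
      have "dok S i" unfolding S_def
      proof (rule dok_finsum)
        fix j assume j: "j \<in> {1..i}"
        then have "dok (zinv x (i - j)) (i - j)" using less by auto
        then show "dok (Fr j (zinv x (i - j)) \<otimes>\<^bsub>Er\<^esub> x j) i" using dok_prod[OF _ xd[of j]] j by fastforce
      qed simp
      then have "dok (Fr 0 (\<ominus>\<^bsub>Er\<^esub> S) \<otimes>\<^bsub>Er\<^esub> uinv x) (i + 0)"
        by (intro dok_prod dok_neg ud)
      then have "dok ((\<ominus>\<^bsub>Er\<^esub> S) \<otimes>\<^bsub>Er\<^esub> uinv x) i"
        using dok_Er[OF \<open>dok S i\<close>] by simp
      then show ?thesis using zinv_rec[OF x, of i] False by (simp add: zstep_def S_def)
    qed
  qed
  moreover have "fst (zinv x 0) = \<one>" using zinv_rec[OF x, of 0] by (simp add: zstep_def uinv_def)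
  ultimately show ?thesis by (simp add: Gp_carrier_dok)
qed

lemma Gp_simps:
  "carrier (Gp p R A) = Gp_carrier p R A"
  "a \<otimes>\<^bsub>Gp p R A\<^esub> b = Gp_mult p R a b"
  "\<one>\<^bsub>Gp p R A\<^esub> = one_seq"
  by (auto simp: Gp_def one_seq_def Er_one Er_zero)

lemma Gp_mult_gm': "a \<in> Gp_carrier p R A \<Longrightarrow> b \<in> Gp_carrier p R A \<Longrightarrow> a \<otimes>\<^bsub>Gp p R A\<^esub> b = gm a b"
  by (simp add: Gp_simps Gp_mult_gm Gp_carrier_SC)

lemma one_seq_Gp: "one_seq \<in> Gp_carrier p R A"
proof -
  have "dok (one_seq i) i" for i
    by (auto simp: one_seq_def dok_def Er_one Er_zero coeff_deg_def A_one Sd_def)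
  then show ?thesis by (simp add: Gp_carrier_dok one_seq_def Er_one)
qed

lemma Gp_group: "group (Gp p R A)"
proof (rule groupI)
  fix x y assume "x \<in> carrier (Gp p R A)" "y \<in> carrier (Gp p R A)"
  then show "x \<otimes>\<^bsub>Gp p R A\<^esub> y \<in> carrier (Gp p R A)"
    by (simp add: Gp_mult_gm' Gp_simps(1) gm_Gp_carrier)
next
  show "\<one>\<^bsub>Gp p R A\<^esub> \<in> carrier (Gp p R A)" by (simp add: Gp_simps one_seq_Gp)
next
  fix x y z assume "x \<in> carrier (Gp p R A)" "y \<in> carrier (Gp p R A)" "z \<in> carrier (Gp p R A)"
  then show "x \<otimes>\<^bsub>Gp p R A\<^esub> y \<otimes>\<^bsub>Gp p R A\<^esub> z = x \<otimes>\<^bsub>Gp p R A\<^esub> (y \<otimes>\<^bsub>Gp p R A\<^esub> z)"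
    by (simp add: Gp_mult_gm' Gp_simps(1) gm_Gp_carrier gm_assoc Gp_carrier_SC)
next
  fix x assume "x \<in> carrier (Gp p R A)"
  then show "\<one>\<^bsub>Gp p R A\<^esub> \<otimes>\<^bsub>Gp p R A\<^esub> x = x"
    by (simp add: Gp_simps Gp_mult_gm one_seq_SC gm_one Gp_carrier_SC)
next
  fix x assume "x \<in> carrier (Gp p R A)"
  then show "\<exists>y\<in>carrier (Gp p R A). y \<otimes>\<^bsub>Gp p R A\<^esub> x = \<one>\<^bsub>Gp p R A\<^esub>"
    by (intro bexI[of _ "zinv x"]) (simp_all add: Gp_simps Gp_mult_gm Gp_carrier_SC zinv_Gp_carrier zinv_inv)
qed

end



lemma (in group) comm_mult_swap:
  assumes x: "x \<in> carrier G" and y: "y \<in> carrier G"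
  shows "(x \<otimes> y \<otimes> inv x \<otimes> inv y) \<otimes> (y \<otimes> x) = x \<otimes> y"
proof -
  have e: "inv y \<otimes> (y \<otimes> x) = x" using x y by (simp add: m_assoc[symmetric])
  have "(x \<otimes> y \<otimes> inv x \<otimes> inv y) \<otimes> (y \<otimes> x) = (x \<otimes> y \<otimes> inv x) \<otimes> (inv y \<otimes> (y \<otimes> x))"
    using x y by (simp add: m_assoc)
  also have "\<dots> = (x \<otimes> y \<otimes> inv x) \<otimes> x" using e by simp
  also have "\<dots> = (x \<otimes> y) \<otimes> (inv x \<otimes> x)" using x y by (simp add: m_assoc)
  also have "\<dots> = x \<otimes> y" using x y by simp
  finally show ?thesis .
qed

context gca begin

abbreviation "G \<equiv> Gp p R A"

lemma filt_iff: "u \<in> Gp_filt p R A N \<longleftrightarrow> u \<in> Gp_carrier p R A \<and> (\<forall>i\<le>N. u i = one_seq i)"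
  unfolding Gp_filt_def one_seq_def Er_one Er_zero
  by (auto simp: Suc_le_eq)

lemma half_iff: "u \<in> Gp_filt_half p R A N \<longleftrightarrow> u \<in> Gp_filt p R A N \<and> fst (u (Suc N)) = \<zero>"
  unfolding Gp_filt_half_def by simp

lemma GC_mem: "u \<in> Gp_carrier p R A \<Longrightarrow> u i \<in> carrier Er"
  using Gp_carrier_SC SC_mem by blast

lemma GC_0: "u \<in> Gp_carrier p R A \<Longrightarrow> fst (u 0) = \<one>"
  unfolding Gp_carrier_def by simp

lemma Fr_pos_unit:
  assumes "u \<in> Gp_carrier p R A" "j > 0" shows "Fr j (u 0) = \<one>\<^bsub>Er\<^esub>"
  using Fr_pos_pair[OF GC_mem[OF assms(1)] assms(2)] GC_0[OF assms(1)] by (simp add: Er_one)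

lemma mult_unit0:
  assumes "u \<in> Gp_carrier p R A" "x \<in> carrier Er" "fst x = \<zero>"
  shows "x \<otimes>\<^bsub>Er\<^esub> u 0 = x"
proof -
  have c: "snd x \<in> carrier R" "snd (u 0) \<in> carrier R" using assms GC_mem[OF assms(1), of 0] by (auto simp: Er_mem)
  show ?thesis
  proof (rule prod_eqI)
    show "fst (x \<otimes>\<^bsub>Er\<^esub> u 0) = fst x" using assms c GC_0[OF assms(1)] by (simp add: Er_mult eps_mult_def)
    show "snd (x \<otimes>\<^bsub>Er\<^esub> u 0) = snd x" using assms c GC_0[OF assms(1)] by (simp add: Er_mult eps_mult_def)
  qed
qed

lemma fst_mult_unit0:
  assumes "u \<in> Gp_carrier p R A" "x \<in> carrier Er"
  shows "fst (x \<otimes>\<^bsub>Er\<^esub> u 0) = fst x"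
  using assms GC_0[OF assms(1)] by (simp add: Er_mult eps_mult_def Er_mem Zc_c)

lemma fst_Fr_zero:
  assumes "x \<in> carrier Er" "fst x = \<zero>" "j > 0" shows "Fr j x = \<zero>\<^bsub>Er\<^esub>"
  using Fr_pos_pair[OF assms(1,3)] assms nat_pow_zero[OF p_pos] by (simp add: Er_zero)

lemma Lf_low:
  assumes u: "u \<in> Gp_filt p R A N" and y: "y \<in> Gp_carrier p R A" and i: "i \<le> N"
  shows "gm u y i = y i"
proof -
  have uc: "u \<in> Gp_carrier p R A" and ue: "\<And>i. i \<le> N \<Longrightarrow> u i = one_seq i" using u by (auto simp: filt_iff)
  note [simp] = GC_mem[OF uc] GC_mem[OF y]
  have "gm u y i = Fr i (u (i - i)) \<otimes>\<^bsub>Er\<^esub> y i"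
    unfolding gm_def
  proof (rule E.finsum_nz1)
    fix j assume "j \<in> {..i}" "j \<noteq> i"
    then show "Fr j (u (i - j)) \<otimes>\<^bsub>Er\<^esub> y j = \<zero>\<^bsub>Er\<^esub>" using ue[of "i - j"] i by (simp add: one_seq_def)
  qed auto
  then show ?thesis using ue[of 0] by (simp add: one_seq_def)
qed

lemma Lf_next:
  assumes u: "u \<in> Gp_filt p R A N" and y: "y \<in> Gp_carrier p R A"
  shows "gm u y (Suc N) = u (Suc N) \<otimes>\<^bsub>Er\<^esub> y 0 \<oplus>\<^bsub>Er\<^esub> y (Suc N)"
proof -
  have uc: "u \<in> Gp_carrier p R A" and ue: "\<And>i. i \<le> N \<Longrightarrow> u i = one_seq i" using u by (auto simp: filt_iff)
  note [simp] = GC_mem[OF uc] GC_mem[OF y]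
  have "gm u y (Suc N) = Fr 0 (u (Suc N - 0)) \<otimes>\<^bsub>Er\<^esub> y 0 \<oplus>\<^bsub>Er\<^esub> Fr (Suc N) (u (Suc N - Suc N)) \<otimes>\<^bsub>Er\<^esub> y (Suc N)"
    unfolding gm_def
  proof (rule E.finsum_nz2)
    fix j assume "j \<in> {..Suc N}" "j \<noteq> 0" "j \<noteq> Suc N"
    then show "Fr j (u (Suc N - j)) \<otimes>\<^bsub>Er\<^esub> y j = \<zero>\<^bsub>Er\<^esub>" using ue[of "Suc N - j"] by (simp add: one_seq_def)
  qed auto
  then show ?thesis using ue[of 0] by (simp add: one_seq_def)
qed

lemma Lc:
  assumes u: "u \<in> Gp_carrier p R A" and y: "y \<in> Gp_carrier p R A"
    and eq: "\<And>i. i \<le> N \<Longrightarrow> gm u y i = y i"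
  shows "u \<in> Gp_filt p R A N"
proof -
  note [simp] = GC_mem[OF u] GC_mem[OF y]
  have uy: "y 0 \<otimes>\<^bsub>Er\<^esub> uinv y = \<one>\<^bsub>Er\<^esub>"
    using uinv_mult[OF y] uinv_closed[OF Gp_carrier_SC[OF y]] by (simp add: E.m_comm)
  have ui: "uinv y \<in> carrier Er" using uinv_closed[OF Gp_carrier_SC[OF y]] .
  have cancel: "a = b" if "a \<otimes>\<^bsub>Er\<^esub> y 0 = b \<otimes>\<^bsub>Er\<^esub> y 0" "a \<in> carrier Er" "b \<in> carrier Er" for a b
  proof -
    have "a = a \<otimes>\<^bsub>Er\<^esub> (y 0 \<otimes>\<^bsub>Er\<^esub> uinv y)" using uy that by simp
    also have "\<dots> = (a \<otimes>\<^bsub>Er\<^esub> y 0) \<otimes>\<^bsub>Er\<^esub> uinv y" using that(2) ui by (simp add: E.m_assoc)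
    also have "\<dots> = (b \<otimes>\<^bsub>Er\<^esub> y 0) \<otimes>\<^bsub>Er\<^esub> uinv y" using that by simp
    also have "\<dots> = b \<otimes>\<^bsub>Er\<^esub> (y 0 \<otimes>\<^bsub>Er\<^esub> uinv y)" using that(3) ui by (simp add: E.m_assoc)
    also have "\<dots> = b" using uy that by simp
    finally show ?thesis .
  qed
  have "u i = one_seq i" if "i \<le> N" for i
    using that
  proof (induction i rule: less_induct)
    case (less i)
    show ?case
    proof (cases "i = 0")
      case True
      then have "u 0 \<otimes>\<^bsub>Er\<^esub> y 0 = y 0" using eq[of 0] gm_0[OF Gp_carrier_SC[OF u] Gp_carrier_SC[OF y]] by simp
      then have "u 0 \<otimes>\<^bsub>Er\<^esub> y 0 = \<one>\<^bsub>Er\<^esub> \<otimes>\<^bsub>Er\<^esub> y 0" by simp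
      then show ?thesis using cancel True by (simp add: one_seq_def)
    next
      case False
      have "gm u y i = Fr 0 (u (i - 0)) \<otimes>\<^bsub>Er\<^esub> y 0 \<oplus>\<^bsub>Er\<^esub> Fr i (u (i - i)) \<otimes>\<^bsub>Er\<^esub> y i"
        unfolding gm_def
      proof (rule E.finsum_nz2)
        fix j assume "j \<in> {..i}" "j \<noteq> 0" "j \<noteq> i"
        then show "Fr j (u (i - j)) \<otimes>\<^bsub>Er\<^esub> y j = \<zero>\<^bsub>Er\<^esub>" using less.IH[of "i - j"] less.prems
          by (simp add: one_seq_def)
      qed (use False in auto)
      then have "u i \<otimes>\<^bsub>Er\<^esub> y 0 \<oplus>\<^bsub>Er\<^esub> y i = \<zero>\<^bsub>Er\<^esub> \<oplus>\<^bsub>Er\<^esub> y i"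
        using less.IH[of 0] less.prems eq[of i] False by (simp add: one_seq_def)
      then have "u i \<otimes>\<^bsub>Er\<^esub> y 0 = \<zero>\<^bsub>Er\<^esub> \<otimes>\<^bsub>Er\<^esub> y 0" using E.add.right_cancel by simp
      then show ?thesis using cancel False by (simp add: one_seq_def)
    qed
  qed
  then show ?thesis using u by (simp add: filt_iff)
qed

lemma Lc_half:
  assumes u: "u \<in> Gp_carrier p R A" and y: "y \<in> Gp_carrier p R A"
    and eq: "\<And>i. i \<le> N \<Longrightarrow> gm u y i = y i"
    and eq2: "fst (gm u y (Suc N)) = fst (y (Suc N))"
  shows "u \<in> Gp_filt_half p R A N"
proof -
  have uf: "u \<in> Gp_filt p R A N" by (rule Lc[OF u y eq])
  note [simp] = GC_mem[OF u] GC_mem[OF y]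
  have "fst (gm u y (Suc N)) = fst (u (Suc N) \<otimes>\<^bsub>Er\<^esub> y 0) \<oplus> fst (y (Suc N))"
    using Lf_next[OF uf y] by (simp add: Er_add)
  then have "fst (u (Suc N)) \<oplus> fst (y (Suc N)) = fst (y (Suc N))"
    using eq2 fst_mult_unit0[OF y GC_mem[OF u]] by simp
  moreover have "fst (u (Suc N)) \<in> carrier R" "fst (y (Suc N)) \<in> carrier R"
    using GC_mem[OF u] GC_mem[OF y] by (auto simp: Er_mem intro: Zc_c)
  ultimately have "fst (u (Suc N)) = \<zero>" using add.r_cancel_one by blast
  then show ?thesis using uf by (simp add: half_iff)
qed

end



context gca begin

lemma filt_GC: "u \<in> Gp_filt p R A N \<Longrightarrow> u \<in> Gp_carrier p R A" by (simp add: filt_iff)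

lemma filt_subgroup: "subgroup (Gp_filt p R A N) G"
proof -
  interpret Gg: group G by (rule Gp_group)
  show ?thesis
  proof (rule Gg.subgroupI)
    show "Gp_filt p R A N \<subseteq> carrier G" by (auto simp: Gp_simps filt_iff)
    show "Gp_filt p R A N \<noteq> {}" using one_seq_Gp by (auto simp: filt_iff)
  next
    fix a assume a: "a \<in> Gp_filt p R A N"
    have ac: "a \<in> carrier G" using a by (simp add: Gp_simps filt_iff)
    have w: "inv\<^bsub>G\<^esub> a \<in> Gp_carrier p R A" using Gg.inv_closed[OF ac] by (simp add: Gp_simps)
    have "gm a (inv\<^bsub>G\<^esub> a) = one_seq"
      using Gg.r_inv[OF ac] Gp_mult_gm'[OF filt_GC[OF a] w] by (simp add: Gp_simps)
    then have "\<And>i. i \<le> N \<Longrightarrow> (inv\<^bsub>G\<^esub> a) i = one_seq i" using Lf_low[OF a w] by metis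
    then show "inv\<^bsub>G\<^esub> a \<in> Gp_filt p R A N" using w by (simp add: filt_iff)
  next
    fix a b assume a: "a \<in> Gp_filt p R A N" and b: "b \<in> Gp_filt p R A N"
    have "a \<otimes>\<^bsub>G\<^esub> b = gm a b" using Gp_mult_gm'[OF filt_GC[OF a] filt_GC[OF b]] .
    moreover have "gm a b \<in> Gp_carrier p R A" using gm_Gp_carrier[OF filt_GC[OF a] filt_GC[OF b]] .
    moreover have "\<And>i. i \<le> N \<Longrightarrow> gm a b i = one_seq i" using Lf_low[OF a filt_GC[OF b]] b
      by (simp add: filt_iff)
    ultimately show "a \<otimes>\<^bsub>G\<^esub> b \<in> Gp_filt p R A N" by (simp add: filt_iff)
  qed
qed

lemma half_subgroup: "subgroup (Gp_filt_half p R A N) G"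
proof -
  interpret Gg: group G by (rule Gp_group)
  show ?thesis
  proof (rule Gg.subgroupI)
    show "Gp_filt_half p R A N \<subseteq> carrier G" by (auto simp: Gp_simps filt_iff half_iff)
    have "one_seq \<in> Gp_filt_half p R A N" using one_seq_Gp by (simp add: half_iff filt_iff one_seq_def Er_zero)
    then show "Gp_filt_half p R A N \<noteq> {}" by blast
  next
    fix a assume ah: "a \<in> Gp_filt_half p R A N"
    then have a: "a \<in> Gp_filt p R A N" and a0: "fst (a (Suc N)) = \<zero>" by (auto simp: half_iff)
    have ac: "a \<in> carrier G" using a by (simp add: Gp_simps filt_iff)
    have w: "inv\<^bsub>G\<^esub> a \<in> Gp_carrier p R A" using Gg.inv_closed[OF ac] by (simp add: Gp_simps)
    have wf: "inv\<^bsub>G\<^esub> a \<in> Gp_filt p R A N"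
      using subgroup.m_inv_closed[OF filt_subgroup a] .
    have e: "gm a (inv\<^bsub>G\<^esub> a) = one_seq"
      using Gg.r_inv[OF ac] Gp_mult_gm'[OF filt_GC[OF a] w] by (simp add: Gp_simps)
    have "fst (gm a (inv\<^bsub>G\<^esub> a) (Suc N)) = fst (a (Suc N) \<otimes>\<^bsub>Er\<^esub> (inv\<^bsub>G\<^esub> a) 0) \<oplus> fst ((inv\<^bsub>G\<^esub> a) (Suc N))"
      using Lf_next[OF a w] by (simp add: Er_add)
    then have "\<zero> = \<zero> \<oplus> fst ((inv\<^bsub>G\<^esub> a) (Suc N))"
      using e a0 fst_mult_unit0[OF w GC_mem[OF filt_GC[OF a]]] by (simp add: one_seq_def Er_zero)
    moreover have "fst ((inv\<^bsub>G\<^esub> a) (Suc N)) \<in> carrier R" using GC_mem[OF w] by (auto simp: Er_mem intro: Zc_c)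
    ultimately have "fst ((inv\<^bsub>G\<^esub> a) (Suc N)) = \<zero>" by simp
    then show "inv\<^bsub>G\<^esub> a \<in> Gp_filt_half p R A N" using wf by (simp add: half_iff)
  next
    fix a b assume ah: "a \<in> Gp_filt_half p R A N" and bh: "b \<in> Gp_filt_half p R A N"
    then have a: "a \<in> Gp_filt p R A N" and a0: "fst (a (Suc N)) = \<zero>"
      and b: "b \<in> Gp_filt p R A N" and b0: "fst (b (Suc N)) = \<zero>" by (auto simp: half_iff)
    have ab: "a \<otimes>\<^bsub>G\<^esub> b \<in> Gp_filt p R A N" using subgroup.m_closed[OF filt_subgroup a b] .
    have "a \<otimes>\<^bsub>G\<^esub> b = gm a b" using Gp_mult_gm'[OF filt_GC[OF a] filt_GC[OF b]] .
    moreover have "fst (gm a b (Suc N)) = fst (a (Suc N) \<otimes>\<^bsub>Er\<^esub> b 0) \<oplus> fst (b (Suc N))"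
      using Lf_next[OF a filt_GC[OF b]] by (simp add: Er_add)
    moreover have "fst (a (Suc N) \<otimes>\<^bsub>Er\<^esub> b 0) = \<zero>"
      using fst_mult_unit0[OF filt_GC[OF b] GC_mem[OF filt_GC[OF a]]] a0 by simp
    ultimately show "a \<otimes>\<^bsub>G\<^esub> b \<in> Gp_filt_half p R A N" using ab b0 by (simp add: half_iff)
  qed
qed

lemma comm_filt:
  assumes x: "x \<in> carrier G" and y: "y \<in> carrier G"
    and eq: "\<And>i. i \<le> N \<Longrightarrow> gm x y i = gm y x i"
  shows "x \<otimes>\<^bsub>G\<^esub> y \<otimes>\<^bsub>G\<^esub> inv\<^bsub>G\<^esub> x \<otimes>\<^bsub>G\<^esub> inv\<^bsub>G\<^esub> y \<in> Gp_filt p R A N"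
proof -
  interpret Gg: group G by (rule Gp_group)
  define c where "c = x \<otimes>\<^bsub>G\<^esub> y \<otimes>\<^bsub>G\<^esub> inv\<^bsub>G\<^esub> x \<otimes>\<^bsub>G\<^esub> inv\<^bsub>G\<^esub> y"
  have cc: "c \<in> Gp_carrier p R A" unfolding c_def using x y by (simp add: Gp_simps[symmetric])
  have xc: "x \<in> Gp_carrier p R A" "y \<in> Gp_carrier p R A" using x y by (auto simp: Gp_simps)
  have yx: "gm y x \<in> Gp_carrier p R A" using gm_Gp_carrier xc by simp
  have "gm c (gm y x) = gm x y"
    using Gg.comm_mult_swap[OF x y] xc yx cc unfolding c_def[symmetric]
    by (simp add: Gp_mult_gm')
  then show ?thesis unfolding c_def[symmetric] using Lc[OF cc yx] eq by metis
qed

lemma comm_half: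
  assumes x: "x \<in> carrier G" and y: "y \<in> carrier G"
    and eq: "\<And>i. i \<le> N \<Longrightarrow> gm x y i = gm y x i"
    and eq2: "fst (gm x y (Suc N)) = fst (gm y x (Suc N))"
  shows "x \<otimes>\<^bsub>G\<^esub> y \<otimes>\<^bsub>G\<^esub> inv\<^bsub>G\<^esub> x \<otimes>\<^bsub>G\<^esub> inv\<^bsub>G\<^esub> y \<in> Gp_filt_half p R A N"
proof -
  interpret Gg: group G by (rule Gp_group)
  define c where "c = x \<otimes>\<^bsub>G\<^esub> y \<otimes>\<^bsub>G\<^esub> inv\<^bsub>G\<^esub> x \<otimes>\<^bsub>G\<^esub> inv\<^bsub>G\<^esub> y"
  have cc: "c \<in> Gp_carrier p R A" unfolding c_def using x y by (simp add: Gp_simps[symmetric])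
  have xc: "x \<in> Gp_carrier p R A" "y \<in> Gp_carrier p R A" using x y by (auto simp: Gp_simps)
  have yx: "gm y x \<in> Gp_carrier p R A" using gm_Gp_carrier xc by simp
  have "gm c (gm y x) = gm x y"
    using Gg.comm_mult_swap[OF x y] xc yx cc unfolding c_def[symmetric]
    by (simp add: Gp_mult_gm')
  then show ?thesis unfolding c_def[symmetric] using Lc_half[OF cc yx] eq eq2 by metis
qed

end



context gca begin

lemma filt_low: "x \<in> Gp_filt p R A N \<Longrightarrow> i \<le> N \<Longrightarrow> x i = one_seq i" by (simp add: filt_iff)

lemma filt_zero: "x \<in> Gp_filt p R A N \<Longrightarrow> 0 < i \<Longrightarrow> i \<le> N \<Longrightarrow> x i = \<zero>\<^bsub>Er\<^esub>"
  by (simp add: filt_iff one_seq_def)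

lemma filt_one: "x \<in> Gp_filt p R A N \<Longrightarrow> x 0 = \<one>\<^bsub>Er\<^esub>"
  by (simp add: filt_iff one_seq_def)

lemma gm_1:
  assumes x: "x \<in> Gp_carrier p R A" and y: "y \<in> Gp_carrier p R A"
  shows "gm x y 1 = x 1 \<otimes>\<^bsub>Er\<^esub> y 0 \<oplus>\<^bsub>Er\<^esub> y 1"
proof -
  note [simp] = GC_mem[OF x] GC_mem[OF y]
  have "gm x y 1 = Fr 0 (x (1 - 0)) \<otimes>\<^bsub>Er\<^esub> y 0 \<oplus>\<^bsub>Er\<^esub> Fr 1 (x (1 - 1)) \<otimes>\<^bsub>Er\<^esub> y 1"
    unfolding gm_def by (rule E.finsum_nz2) auto
  then show ?thesis using Fr_pos_unit[OF x, of 1] by simp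
qed

lemma C1:
  assumes x: "x \<in> Gp_carrier p R A" and y: "y \<in> Gp_carrier p R A"
  shows "gm x y 0 = gm y x 0" "fst (gm x y 1) = fst (gm y x 1)"
proof -
  note [simp] = GC_mem[OF x] GC_mem[OF y]
  show "gm x y 0 = gm y x 0"
    using gm_0[OF Gp_carrier_SC[OF x] Gp_carrier_SC[OF y]] gm_0[OF Gp_carrier_SC[OF y] Gp_carrier_SC[OF x]]
    by (simp add: E.m_comm)
  have f: "fst (gm a b 1) = fst (a 1) \<oplus> fst (b 1)" if a: "a \<in> Gp_carrier p R A" and b: "b \<in> Gp_carrier p R A" for a b
    using gm_1[OF a b] fst_mult_unit0[OF b GC_mem[OF a]] by (simp add: Er_add)
  have c: "fst (x 1) \<in> carrier R" "fst (y 1) \<in> carrier R"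
    using GC_mem[OF x, of 1] GC_mem[OF y, of 1] Zc_c unfolding Er_mem by blast+
  show "fst (gm x y 1) = fst (gm y x 1)" using f[OF x y] f[OF y x] c by (simp add: a_comm)
qed

lemma gm_two:
  assumes x: "x \<in> Gp_carrier p R A" and y: "y \<in> Gp_carrier p R A"
    and x0: "x 0 = \<one>\<^bsub>Er\<^esub>" and y0: "y 0 = \<one>\<^bsub>Er\<^esub>" and i: "0 < i"
    and z: "\<And>j. 0 < j \<Longrightarrow> j < i \<Longrightarrow> Fr j (x (i - j)) \<otimes>\<^bsub>Er\<^esub> y j = \<zero>\<^bsub>Er\<^esub>"
  shows "gm x y i = x i \<oplus>\<^bsub>Er\<^esub> y i"
proof -
  note [simp] = GC_mem[OF x] GC_mem[OF y]
  have "gm x y i = Fr 0 (x (i - 0)) \<otimes>\<^bsub>Er\<^esub> y 0 \<oplus>\<^bsub>Er\<^esub> Fr i (x (i - i)) \<otimes>\<^bsub>Er\<^esub> y i"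
    unfolding gm_def
  proof (rule E.finsum_nz2)
    fix j assume "j \<in> {..i}" "j \<noteq> 0" "j \<noteq> i"
    then show "Fr j (x (i - j)) \<otimes>\<^bsub>Er\<^esub> y j = \<zero>\<^bsub>Er\<^esub>" using z by auto
  qed (use i in auto)
  then show ?thesis using x0 y0 by simp
qed

lemma C3:
  assumes x: "x \<in> Gp_filt_half p R A 0" and y: "y \<in> Gp_filt_half p R A 0" and i: "i \<le> 2"
  shows "gm x y i = gm y x i"
proof -
  have xf: "x \<in> Gp_filt p R A 0" "fst (x 1) = \<zero>" and yf: "y \<in> Gp_filt p R A 0" "fst (y 1) = \<zero>"
    using x y by (auto simp: half_iff)
  have xc: "x \<in> Gp_carrier p R A" and yc: "y \<in> Gp_carrier p R A" using xf yf by (auto simp: filt_iff)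
  note [simp] = GC_mem[OF xc] GC_mem[OF yc]
  have x0: "x 0 = \<one>\<^bsub>Er\<^esub>" using filt_one[OF xf(1)] .
  have y0: "y 0 = \<one>\<^bsub>Er\<^esub>" using filt_one[OF yf(1)] .
  have two: "gm a b i = a i \<oplus>\<^bsub>Er\<^esub> b i"
    if a: "a \<in> Gp_carrier p R A" and b: "b \<in> Gp_carrier p R A" and a0: "a 0 = \<one>\<^bsub>Er\<^esub>"
      and b0: "b 0 = \<one>\<^bsub>Er\<^esub>" and a1: "fst (a 1) = \<zero>" and "0 < i" for a b
  proof (rule gm_two[OF a b a0 b0 \<open>0 < i\<close>])
    fix j assume "0 < j" "j < i"
    then have "j = 1" "i - j = 1" using i by auto
    then show "Fr j (a (i - j)) \<otimes>\<^bsub>Er\<^esub> b j = \<zero>\<^bsub>Er\<^esub>"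
      using fst_Fr_zero[OF GC_mem[OF a] a1, of 1] GC_mem[OF b] by simp
  qed
  show ?thesis
  proof (cases "i = 0")
    case True then show ?thesis using C1(1)[OF xc yc] by simp
  next
    case False
    then show ?thesis using two[OF xc yc x0 y0 xf(2)] two[OF yc xc y0 x0 yf(2)] by (simp add: E.a_comm)
  qed
qed

lemma C4:
  assumes x: "x \<in> Gp_filt p R A m" and y: "y \<in> Gp_filt p R A m" and i: "i \<le> 2 * m"
  shows "gm x y i = gm y x i"
proof -
  have xc: "x \<in> Gp_carrier p R A" and yc: "y \<in> Gp_carrier p R A" using x y by (auto simp: filt_iff)
  note [simp] = GC_mem[OF xc] GC_mem[OF yc]
  have x0: "x 0 = \<one>\<^bsub>Er\<^esub>" using filt_one[OF x] .
  have y0: "y 0 = \<one>\<^bsub>Er\<^esub>" using filt_one[OF y] .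
  have two: "gm a b i = a i \<oplus>\<^bsub>Er\<^esub> b i"
    if a: "a \<in> Gp_filt p R A m" and b: "b \<in> Gp_filt p R A m" and "0 < i" for a b
  proof (rule gm_two[OF filt_GC[OF a] filt_GC[OF b] filt_one[OF a] filt_one[OF b] \<open>0 < i\<close>])
    fix j assume j: "0 < j" "j < i"
    show "Fr j (a (i - j)) \<otimes>\<^bsub>Er\<^esub> b j = \<zero>\<^bsub>Er\<^esub>"
    proof (cases "j \<le> m")
      case True
      then show ?thesis using filt_zero[OF b j(1) True] GC_mem[OF filt_GC[OF a]] by simp
    next
      case False
      then have "i - j \<le> m" "0 < i - j" using i j by auto
      then show ?thesis using filt_zero[OF a, of "i - j"] GC_mem[OF filt_GC[OF b]] by simp
    qed
  qed
  show ?thesis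
  proof (cases "i = 0")
    case True then show ?thesis using C1(1)[OF xc yc] by simp
  next
    case False
    then show ?thesis using two[OF x y] two[OF y x] by (simp add: E.a_comm)
  qed
qed

lemma C2:
  assumes x: "x \<in> Gp_filt_half p R A k" and y: "y \<in> Gp_carrier p R A"
  shows "\<And>i. i \<le> Suc k \<Longrightarrow> gm x y i = gm y x i"
    and "fst (gm x y (Suc (Suc k))) = fst (gm y x (Suc (Suc k)))"
proof -
  have xf: "x \<in> Gp_filt p R A k" and xk: "fst (x (Suc k)) = \<zero>" using x by (auto simp: half_iff)
  have xc: "x \<in> Gp_carrier p R A" using xf by (simp add: filt_iff)
  note [simp] = GC_mem[OF xc] GC_mem[OF y]
  have x0: "x 0 = \<one>\<^bsub>Er\<^esub>" using filt_one[OF xf] .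
  have xz: "\<And>j. 0 < j \<Longrightarrow> j \<le> k \<Longrightarrow> x j = \<zero>\<^bsub>Er\<^esub>" using filt_zero[OF xf] by auto
  have yx_low: "gm y x i = y i" if "i \<le> k" for i
  proof -
    have "gm y x i = Fr 0 (y (i - 0)) \<otimes>\<^bsub>Er\<^esub> x 0"
      unfolding gm_def
    proof (rule E.finsum_nz1)
      fix j assume "j \<in> {..i}" "j \<noteq> 0"
      then show "Fr j (y (i - j)) \<otimes>\<^bsub>Er\<^esub> x j = \<zero>\<^bsub>Er\<^esub>" using xz[of j] that by simp
    qed auto
    then show ?thesis using x0 by simp
  qed
  have xSk: "x (Suc k) \<otimes>\<^bsub>Er\<^esub> y 0 = x (Suc k)" using mult_unit0[OF y _ xk] by simp
  show "gm x y i = gm y x i" if i: "i \<le> Suc k" for i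
  proof (cases "i \<le> k")
    case True then show ?thesis using Lf_low[OF xf y True] yx_low by simp
  next
    case False
    then have iS: "i = Suc k" using i by simp
    have "gm y x (Suc k) = Fr 0 (y (Suc k - 0)) \<otimes>\<^bsub>Er\<^esub> x 0 \<oplus>\<^bsub>Er\<^esub> Fr (Suc k) (y (Suc k - Suc k)) \<otimes>\<^bsub>Er\<^esub> x (Suc k)"
      unfolding gm_def
    proof (rule E.finsum_nz2)
      fix j assume "j \<in> {..Suc k}" "j \<noteq> 0" "j \<noteq> Suc k"
      then show "Fr j (y (Suc k - j)) \<otimes>\<^bsub>Er\<^esub> x j = \<zero>\<^bsub>Er\<^esub>" using xz[of j] by simp
    qed auto
    then have "gm y x (Suc k) = y (Suc k) \<oplus>\<^bsub>Er\<^esub> x (Suc k)" using x0 Fr_pos_unit[OF y, of "Suc k"] by simp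
    moreover have "gm x y (Suc k) = x (Suc k) \<oplus>\<^bsub>Er\<^esub> y (Suc k)" using Lf_next[OF xf y] xSk by simp
    ultimately show ?thesis using iS by (simp add: E.a_comm)
  qed
  have "gm x y (Suc (Suc k)) = Fr 0 (x (Suc (Suc k) - 0)) \<otimes>\<^bsub>Er\<^esub> y 0 \<oplus>\<^bsub>Er\<^esub>
      (Fr 1 (x (Suc (Suc k) - 1)) \<otimes>\<^bsub>Er\<^esub> y 1 \<oplus>\<^bsub>Er\<^esub> Fr (Suc (Suc k)) (x (Suc (Suc k) - Suc (Suc k))) \<otimes>\<^bsub>Er\<^esub> y (Suc (Suc k)))"
    unfolding gm_def
  proof (rule E.finsum_nz3)
    fix j assume j: "j \<in> {..Suc (Suc k)}" "j \<noteq> 0" "j \<noteq> 1" "j \<noteq> Suc (Suc k)"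
    then show "Fr j (x (Suc (Suc k) - j)) \<otimes>\<^bsub>Er\<^esub> y j = \<zero>\<^bsub>Er\<^esub>" using xz[of "Suc (Suc k) - j"] by simp
  qed auto
  also have "Fr 1 (x (Suc (Suc k) - 1)) = \<zero>\<^bsub>Er\<^esub>" using fst_Fr_zero[OF _ xk, of 1] by simp
  finally have L: "gm x y (Suc (Suc k)) = x (Suc (Suc k)) \<otimes>\<^bsub>Er\<^esub> y 0 \<oplus>\<^bsub>Er\<^esub> y (Suc (Suc k))"
    using x0 by simp
  have "gm y x (Suc (Suc k)) = Fr 0 (y (Suc (Suc k) - 0)) \<otimes>\<^bsub>Er\<^esub> x 0 \<oplus>\<^bsub>Er\<^esub>
      (Fr (Suc k) (y (Suc (Suc k) - Suc k)) \<otimes>\<^bsub>Er\<^esub> x (Suc k) \<oplus>\<^bsub>Er\<^esub> Fr (Suc (Suc k)) (y (Suc (Suc k) - Suc (Suc k))) \<otimes>\<^bsub>Er\<^esub> x (Suc (Suc k)))"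
    unfolding gm_def
  proof (rule E.finsum_nz3)
    fix j assume j: "j \<in> {..Suc (Suc k)}" "j \<noteq> 0" "j \<noteq> Suc k" "j \<noteq> Suc (Suc k)"
    then show "Fr j (y (Suc (Suc k) - j)) \<otimes>\<^bsub>Er\<^esub> x j = \<zero>\<^bsub>Er\<^esub>" using xz[of j] by simp
  qed auto
  then have Rr: "gm y x (Suc (Suc k)) = y (Suc (Suc k)) \<oplus>\<^bsub>Er\<^esub> (Fr (Suc k) (y 1) \<otimes>\<^bsub>Er\<^esub> x (Suc k) \<oplus>\<^bsub>Er\<^esub> x (Suc (Suc k)))"
    using x0 Fr_pos_unit[OF y, of "Suc (Suc k)"] by simp
  have m0: "fst (Fr (Suc k) (y 1) \<otimes>\<^bsub>Er\<^esub> x (Suc k)) = \<zero>"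
  proof -
    have "Fr (Suc k) (y 1) \<in> carrier Er" by simp
    then have "fst (Fr (Suc k) (y 1)) \<in> carrier R" using Zc_c unfolding Er_mem by blast
    then show ?thesis using xk by (simp add: Er_mult eps_mult_def)
  qed
  have c: "fst (x (Suc (Suc k))) \<in> carrier R" "fst (y (Suc (Suc k))) \<in> carrier R"
    using GC_mem[OF xc, of "Suc (Suc k)"] GC_mem[OF y, of "Suc (Suc k)"] Zc_c unfolding Er_mem by blast+
  show "fst (gm x y (Suc (Suc k))) = fst (gm y x (Suc (Suc k)))"
    unfolding L Rr using m0 c fst_mult_unit0[OF y GC_mem[OF xc], of "Suc (Suc k)"]
    by (simp add: Er_add a_comm)
qed

end



context gca begin

lemma gen_incl:
  assumes "subgroup H G" "\<And>h k. h \<in> K1 \<Longrightarrow> k \<in> K2 \<Longrightarrow> h \<otimes>\<^bsub>G\<^esub> k \<otimes>\<^bsub>G\<^esub> inv\<^bsub>G\<^esub> h \<otimes>\<^bsub>G\<^esub> inv\<^bsub>G\<^esub> k \<in> H"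
  shows "generate G (\<Union>h\<in>K1. \<Union>k\<in>K2. {h \<otimes>\<^bsub>G\<^esub> k \<otimes>\<^bsub>G\<^esub> inv\<^bsub>G\<^esub> h \<otimes>\<^bsub>G\<^esub> inv\<^bsub>G\<^esub> k}) \<subseteq> H"
proof -
  interpret Gg: group G by (rule Gp_group)
  show ?thesis by (rule Gg.generate_subgroup_incl) (use assms in auto)
qed

lemma GC_G: "carrier G = Gp_carrier p R A" by (simp add: Gp_simps)

lemma LC: "lower_central G (Suc k) \<subseteq> Gp_filt_half p R A k"
proof (induction k)
  case 0
  have "lower_central G (Suc 0) = comm_subgroup G (carrier G) (carrier G)"
    by (simp add: lower_central_def)
  also have "\<dots> \<subseteq> Gp_filt_half p R A 0"
    unfolding comm_subgroup_def
  proof (rule gen_incl[OF half_subgroup])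
    fix h k assume h: "h \<in> carrier G" and k: "k \<in> carrier G"
    show "h \<otimes>\<^bsub>G\<^esub> k \<otimes>\<^bsub>G\<^esub> inv\<^bsub>G\<^esub> h \<otimes>\<^bsub>G\<^esub> inv\<^bsub>G\<^esub> k \<in> Gp_filt_half p R A 0"
      using C1[of h k] h k by (intro comm_half) (auto simp: GC_G)
  qed
  finally show ?case .
next
  case (Suc k)
  have "lower_central G (Suc (Suc k)) = comm_subgroup G (lower_central G (Suc k)) (carrier G)"
    by (simp add: lower_central_def)
  also have "\<dots> \<subseteq> Gp_filt_half p R A (Suc k)"
    unfolding comm_subgroup_def
  proof (rule gen_incl[OF half_subgroup])
    fix h g assume h: "h \<in> lower_central G (Suc k)" and g: "g \<in> carrier G"
    have hh: "h \<in> Gp_filt_half p R A k" using h Suc by blast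
    then have hc: "h \<in> carrier G" by (simp add: half_iff filt_iff GC_G)
    show "h \<otimes>\<^bsub>G\<^esub> g \<otimes>\<^bsub>G\<^esub> inv\<^bsub>G\<^esub> h \<otimes>\<^bsub>G\<^esub> inv\<^bsub>G\<^esub> g \<in> Gp_filt_half p R A (Suc k)"
      using C2[OF hh, of g] g by (intro comm_half[OF hc g]) (auto simp: GC_G)
  qed
  finally show ?case .
qed

lemma DS1: "derived_series G 1 = lower_central G 1"
  by (simp add: derived_series_def lower_central_def derived_def comm_subgroup_def)

lemma DS: "derived_series G (Suc (Suc k)) \<subseteq> Gp_filt p R A (2 * Suc k)"
proof (induction k)
  case 0
  have d1: "derived_series G 1 \<subseteq> Gp_filt_half p R A 0" using DS1 LC[of 0] by simp
  have "derived_series G (Suc (Suc 0)) = derived G (derived_series G 1)"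
    by (simp add: derived_series_def)
  also have "\<dots> \<subseteq> Gp_filt p R A 2"
    unfolding derived_def
  proof (rule gen_incl[OF filt_subgroup])
    fix h g assume h: "h \<in> derived_series G 1" and g: "g \<in> derived_series G 1"
    have hh: "h \<in> Gp_filt_half p R A 0" and gh: "g \<in> Gp_filt_half p R A 0" using h g d1 by auto
    then have hc: "h \<in> carrier G" "g \<in> carrier G" by (auto simp: half_iff filt_iff GC_G)
    show "h \<otimes>\<^bsub>G\<^esub> g \<otimes>\<^bsub>G\<^esub> inv\<^bsub>G\<^esub> h \<otimes>\<^bsub>G\<^esub> inv\<^bsub>G\<^esub> g \<in> Gp_filt p R A 2"
      using C3[OF hh gh] by (intro comm_filt[OF hc])
  qed
  finally show ?case by simp
next
  case (Suc k)
  have "derived_series G (Suc (Suc (Suc k))) = derived G (derived_series G (Suc (Suc k)))"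
    by (simp add: derived_series_def)
  also have "\<dots> \<subseteq> Gp_filt p R A (2 * Suc (Suc k))"
    unfolding derived_def
  proof (rule gen_incl[OF filt_subgroup])
    fix h g assume h: "h \<in> derived_series G (Suc (Suc k))" and g: "g \<in> derived_series G (Suc (Suc k))"
    have hh: "h \<in> Gp_filt p R A (2 * Suc k)" and gh: "g \<in> Gp_filt p R A (2 * Suc k)" using h g Suc by auto
    then have hc: "h \<in> carrier G" "g \<in> carrier G" by (auto simp: filt_iff GC_G)
    show "h \<otimes>\<^bsub>G\<^esub> g \<otimes>\<^bsub>G\<^esub> inv\<^bsub>G\<^esub> h \<otimes>\<^bsub>G\<^esub> inv\<^bsub>G\<^esub> g \<in> Gp_filt p R A (2 * Suc (Suc k))"
      using C4[OF hh gh] by (intro comm_filt[OF hc]) auto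
  qed
  finally show ?case .
qed

lemma main:
  "derived_series G 1 = lower_central G 1
   \<and> lower_central G 1 \<subseteq> Gp_filt_half p R A 0
   \<and> (\<forall>k::nat. k \<ge> 1 \<longrightarrow>
        derived_series G (k + 1) \<subseteq> Gp_filt p R A (2 * k)
      \<and> lower_central G (k + 1) \<subseteq> Gp_filt_half p R A k)"
proof (intro conjI allI impI)
  show "derived_series G 1 = lower_central G 1" by (rule DS1)
  show "lower_central G 1 \<subseteq> Gp_filt_half p R A 0" using LC[of 0] by simp
  fix k :: nat assume k: "k \<ge> 1"
  then obtain k' where k': "k = Suc k'" by (cases k) auto
  show "derived_series G (k + 1) \<subseteq> Gp_filt p R A (2 * k)" using DS[of k'] k' by simp
  show "lower_central G (k + 1) \<subseteq> Gp_filt_half p R A k" using LC[of k] by simp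
qed

end

theorem corollary3p3:
  fixes p :: nat and R :: "('a, 'b) ring_scheme" and A :: "int \<Rightarrow> 'a set"
  assumes "Factorial_Ring.prime p"
    and "graded_comm_algebra p R A"
  shows "derived_series (Gp p R A) 1 = lower_central (Gp p R A) 1
       \<and> lower_central (Gp p R A) 1 \<subseteq> Gp_filt_half p R A 0
       \<and> (\<forall>k::nat. k \<ge> 1 \<longrightarrow>
            derived_series (Gp p R A) (k + 1) \<subseteq> Gp_filt p R A (2 * k)
          \<and> lower_central (Gp p R A) (k + 1) \<subseteq> Gp_filt_half p R A k)"
proof -
  have r: "ring R" using assms(2) unfolding graded_comm_algebra_def by (elim conjE) assumption
  interpret gca R p A by (intro gca.intro gca_axioms.intro r assms)
  show ?thesis by (rule main)
qed



end
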